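(* For a unital algebra $A$ over a field $k$, there is a bijective correspondence between weak bialgebra structures on $A$ and weak multiplier bialgebra structures on $A$.
   Context: For a unital algebra $A$ one has $\mathbb M(A)=A$ and $\mathbb M(A\otimes A)=A\otimes A$. A weak bialgebra structure on a unital $k$-algebra $A$ is a coassociative, counital coalgebra structure $(\Delta,\epsilon)$ with multiplicative $\Delta:A\to A\otimes A$, such that $(\Delta\otimes\mathrm{id})\Delta(1)=(\Delta(1)\otimes1)(1\otimes\Delta(1))=(1\otimes\Delta(1))(\Delta(1)\otimes1)$ and $\epsilon(abc)=(\epsilon\otimes\epsilon)((a\otimes1)\Delta(b)(1\otimes c))=(\epsilon\otimes\epsilon)((a\otimes1)\Delta^{\mathrm{op}}(b)(1\otimes c))$ for all $a,b,c$, where $\Delta^{\mathrm{op}}=\mathsf{tw}\circ\Delta$ and $\mathsf{tw}(a\otimes b)=b\otimes a$. A weak multiplier bialgebra over $k$ is an idempotent algebra $A$ (i.e. $\mu:A\otimes A\to A$ surjective) with non-degenerate multiplication (($ab=0\ \forall a$)$\Rightarrow b=0$ and ($ba=0\ \forall a$)$\Rightarrow b=0$), with multiplier algebra $\mathbb M(A)$ (pairs $(\lambda,\rho)$ of linear maps $A\to A$ with $a\lambda(b)=\rho(a)b$, containing $A$ as a dense ideal; $A\otimes A\subseteq\mathbb M(A\otimes A)$), together with an idempotent $E\in\mathbb M(A\otimes A)$, a multiplicative linear $\Delta:A\to\mathbb M(A\otimes A)$ and a linear $\epsilon:A\to k$ such that: (i) $T_1(a\otimes b):=\Delta(a)(1\otimes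 b)$ and $T_2(a\otimes b):=(a\otimes1)\Delta(b)$ lie in $A\otimes A$; (ii) $(T_2\otimes\mathrm{id})(\mathrm{id}\otimes T_1)=(\mathrm{id}\otimes T_1)(T_2\otimes\mathrm{id})$; (iii) $(\epsilon\otimes\mathrm{id})T_1=\mu=(\mathrm{id}\otimes\epsilon)T_2$; (iv) $\langle\Delta(a)(b\otimes b')\rangle=\langle E(b\otimes b')\rangle$ and $\langle(b\otimes b')\Delta(a)\rangle=\langle(b\otimes b')E\rangle$ (linear spans over $a,b,b'\in A$); (v) $(E\otimes1)(1\otimes E)=E^{(3)}=(1\otimes E)(E\otimes1)$ where $E^{(3)}:=(\overline{\mathrm{id}\otimes\Delta})(E)=(\overline{\Delta\otimes\mathrm{id}})(E)$, with $\overline{\ \cdot\ }$ denoting the unique multiplicative extensions to multiplier algebras sending $1$ to the idempotent $E$ (resp. its appropriate leg), which exist by (iv); (vi) $(\epsilon\otimes\mathrm{id})((1\otimes a)E(b\otimes c))=(\epsilon\otimes\mathrm{id})(\Delta(a)(b\otimes c))$ and $(\epsilon\otimes\mathrm{id})((a\otimes b)E(1\otimes c))=(\epsilon\otimes\mathrm{id})((a\otimes b)\Delta(c))$ for all $a,b,c\in A$. *)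

theory Defs
  imports "HOL-Library.Poly_Mapping"
begin

text \<open>Vector spaces over a field 'k are modelled as free modules 'b =>0 'k
(finitely supported functions on a basis 'b). Every k-vector space is of this
form up to isomorphism; tensor products are then concrete:
(X =>0 k) tensor (Y =>0 k) = (X * Y =>0 k).\<close>

definition sc :: "'k::field \<Rightarrow> ('a \<Rightarrow>\<^sub>0 'k) \<Rightarrow> ('a \<Rightarrow>\<^sub>0 'k)" where
  "sc c x = Poly_Mapping.map ((*) c) x"

definition bv :: "'a \<Rightarrow> ('a \<Rightarrow>\<^sub>0 'k::field)" where
  "bv i = Poly_Mapping.single i 1"

definition klinear :: "(('a \<Rightarrow>\<^sub>0 'k::field) \<Rightarrow> ('c \<Rightarrow>\<^sub>0 'k)) \<Rightarrow> bool" where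
  "klinear f \<longleftrightarrow> (\<forall>x y. f (x + y) = f x + f y) \<and> (\<forall>c x. f (sc c x) = sc c (f x))"

definition kfunctional :: "(('a \<Rightarrow>\<^sub>0 'k::field) \<Rightarrow> 'k) \<Rightarrow> bool" where
  "kfunctional f \<longleftrightarrow> (\<forall>x y. f (x + y) = f x + f y) \<and> (\<forall>c x. f (sc c x) = c * f x)"

definition kbilinear :: "(('a \<Rightarrow>\<^sub>0 'k::field) \<Rightarrow> ('a \<Rightarrow>\<^sub>0 'k) \<Rightarrow> ('a \<Rightarrow>\<^sub>0 'k)) \<Rightarrow> bool" where
  "kbilinear m \<longleftrightarrow> (\<forall>a. klinear (m a)) \<and> (\<forall>b. klinear (\<lambda>a. m a b))"

definition kspan :: "('a \<Rightarrow>\<^sub>0 'k::field) set \<Rightarrow> ('a \<Rightarrow>\<^sub>0 'k) set" where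
  "kspan S = {x. \<exists>F c. finite F \<and> F \<subseteq> S \<and> x = (\<Sum>s\<in>F. sc (c s) s)}"

definition lext :: "('a \<Rightarrow> ('c \<Rightarrow>\<^sub>0 'k::field)) \<Rightarrow> ('a \<Rightarrow>\<^sub>0 'k) \<Rightarrow> ('c \<Rightarrow>\<^sub>0 'k)" where
  "lext f x = (\<Sum>p\<in>Poly_Mapping.keys x. sc (Poly_Mapping.lookup x p) (f p))"

definition lextk :: "('a \<Rightarrow> 'k::field) \<Rightarrow> ('a \<Rightarrow>\<^sub>0 'k) \<Rightarrow> 'k" where
  "lextk f x = (\<Sum>p\<in>Poly_Mapping.keys x. Poly_Mapping.lookup x p * f p)"

lift_definition tens :: "('a \<Rightarrow>\<^sub>0 'k::field) \<Rightarrow> ('b \<Rightarrow>\<^sub>0 'k) \<Rightarrow> ('a \<times> 'b \<Rightarrow>\<^sub>0 'k)"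
  is "\<lambda>x y p. x (fst p) * y (snd p)"
proof -
  fix x :: "'a \<Rightarrow> 'k" and y :: "'b \<Rightarrow> 'k"
  assume "finite {i. x i \<noteq> 0}" "finite {j. y j \<noteq> 0}"
  then have "finite ({i. x i \<noteq> 0} \<times> {j. y j \<noteq> 0})" by simp
  moreover have "{p. x (fst p) * y (snd p) \<noteq> 0} \<subseteq> {i. x i \<noteq> 0} \<times> {j. y j \<noteq> 0}" by auto
  ultimately show "finite {p. x (fst p) * y (snd p) \<noteq> 0}" by (rule finite_subset[rotated])
qed

definition tmap :: "(('a \<Rightarrow>\<^sub>0 'k::field) \<Rightarrow> ('c \<Rightarrow>\<^sub>0 'k)) \<Rightarrow> (('b \<Rightarrow>\<^sub>0 'k) \<Rightarrow> ('d \<Rightarrow>\<^sub>0 'k))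
    \<Rightarrow> ('a \<times> 'b \<Rightarrow>\<^sub>0 'k) \<Rightarrow> ('c \<times> 'd \<Rightarrow>\<^sub>0 'k)" where
  "tmap f g = lext (\<lambda>p. tens (f (bv (fst p))) (g (bv (snd p))))"

definition tmult :: "(('a \<Rightarrow>\<^sub>0 'k::field) \<Rightarrow> ('a \<Rightarrow>\<^sub>0 'k) \<Rightarrow> ('a \<Rightarrow>\<^sub>0 'k))
    \<Rightarrow> (('b \<Rightarrow>\<^sub>0 'k) \<Rightarrow> ('b \<Rightarrow>\<^sub>0 'k) \<Rightarrow> ('b \<Rightarrow>\<^sub>0 'k))
    \<Rightarrow> ('a \<times> 'b \<Rightarrow>\<^sub>0 'k) \<Rightarrow> ('a \<times> 'b \<Rightarrow>\<^sub>0 'k) \<Rightarrow> ('a \<times> 'b \<Rightarrow>\<^sub>0 'k)" where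
  "tmult mX mY x y = lext (\<lambda>p. lext (\<lambda>q.
      tens (mX (bv (fst p)) (bv (fst q))) (mY (bv (snd p)) (bv (snd q)))) y) x"

definition assocr :: "(('a \<times> 'b) \<times> 'c \<Rightarrow>\<^sub>0 'k::field) \<Rightarrow> ('a \<times> 'b \<times> 'c \<Rightarrow>\<^sub>0 'k)" where
  "assocr = lext (\<lambda>p. bv (fst (fst p), snd (fst p), snd p))"

definition assocl :: "('a \<times> 'b \<times> 'c \<Rightarrow>\<^sub>0 'k::field) \<Rightarrow> (('a \<times> 'b) \<times> 'c \<Rightarrow>\<^sub>0 'k)" where
  "assocl = lext (\<lambda>p. bv ((fst p, fst (snd p)), snd (snd p)))"

definition tw :: "('a \<times> 'b \<Rightarrow>\<^sub>0 'k::field) \<Rightarrow> ('b \<times> 'a \<Rightarrow>\<^sub>0 'k)" where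
  "tw = lext (\<lambda>p. bv (snd p, fst p))"

definition eps_id :: "(('a \<Rightarrow>\<^sub>0 'k::field) \<Rightarrow> 'k) \<Rightarrow> ('a \<times> 'b \<Rightarrow>\<^sub>0 'k) \<Rightarrow> ('b \<Rightarrow>\<^sub>0 'k)" where
  "eps_id \<epsilon> = lext (\<lambda>p. sc (\<epsilon> (bv (fst p))) (bv (snd p)))"

definition id_eps :: "(('b \<Rightarrow>\<^sub>0 'k::field) \<Rightarrow> 'k) \<Rightarrow> ('a \<times> 'b \<Rightarrow>\<^sub>0 'k) \<Rightarrow> ('a \<Rightarrow>\<^sub>0 'k)" where
  "id_eps \<epsilon> = lext (\<lambda>p. sc (\<epsilon> (bv (snd p))) (bv (fst p)))"

definition eps_eps :: "(('a \<Rightarrow>\<^sub>0 'k::field) \<Rightarrow> 'k) \<Rightarrow> ('a \<times> 'a \<Rightarrow>\<^sub>0 'k) \<Rightarrow> 'k" where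
  "eps_eps \<epsilon> = lextk (\<lambda>p. \<epsilon> (bv (fst p)) * \<epsilon> (bv (snd p)))"

definition mu :: "(('a \<Rightarrow>\<^sub>0 'k::field) \<Rightarrow> ('a \<Rightarrow>\<^sub>0 'k) \<Rightarrow> ('a \<Rightarrow>\<^sub>0 'k))
    \<Rightarrow> ('a \<times> 'a \<Rightarrow>\<^sub>0 'k) \<Rightarrow> ('a \<Rightarrow>\<^sub>0 'k)" where
  "mu m = lext (\<lambda>p. m (bv (fst p)) (bv (snd p)))"

definition kalgebra :: "(('a \<Rightarrow>\<^sub>0 'k::field) \<Rightarrow> ('a \<Rightarrow>\<^sub>0 'k) \<Rightarrow> ('a \<Rightarrow>\<^sub>0 'k)) \<Rightarrow> bool" where
  "kalgebra m \<longleftrightarrow> kbilinear m \<and> (\<forall>a b c. m (m a b) c = m a (m b c))"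

definition unital_algebra :: "(('a \<Rightarrow>\<^sub>0 'k::field) \<Rightarrow> ('a \<Rightarrow>\<^sub>0 'k) \<Rightarrow> ('a \<Rightarrow>\<^sub>0 'k)) \<Rightarrow> ('a \<Rightarrow>\<^sub>0 'k) \<Rightarrow> bool" where
  "unital_algebra m u \<longleftrightarrow> kalgebra m \<and> (\<forall>a. m u a = a \<and> m a u = a)"

definition weak_bialgebra ::
  "(('a \<Rightarrow>\<^sub>0 'k::field) \<Rightarrow> ('a \<Rightarrow>\<^sub>0 'k) \<Rightarrow> ('a \<Rightarrow>\<^sub>0 'k)) \<Rightarrow> ('a \<Rightarrow>\<^sub>0 'k)
   \<Rightarrow> (('a \<Rightarrow>\<^sub>0 'k) \<Rightarrow> ('a \<times> 'a \<Rightarrow>\<^sub>0 'k)) \<Rightarrow> (('a \<Rightarrow>\<^sub>0 'k) \<Rightarrow> 'k) \<Rightarrow> bool" where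
  "weak_bialgebra m u \<Delta> \<epsilon> \<longleftrightarrow>
     klinear \<Delta> \<and> kfunctional \<epsilon> \<and>
     (\<forall>a. assocr (tmap \<Delta> id (\<Delta> a)) = tmap id \<Delta> (\<Delta> a)) \<and>
     (\<forall>a. eps_id \<epsilon> (\<Delta> a) = a \<and> id_eps \<epsilon> (\<Delta> a) = a) \<and>
     (\<forall>a b. \<Delta> (m a b) = tmult m m (\<Delta> a) (\<Delta> b)) \<and>
     assocr (tmap \<Delta> id (\<Delta> u)) =
       tmult m (tmult m m) (assocr (tens (\<Delta> u) u)) (tens u (\<Delta> u)) \<and>
     assocr (tmap \<Delta> id (\<Delta> u)) =
       tmult m (tmult m m) (tens u (\<Delta> u)) (assocr (tens (\<Delta> u) u)) \<and>
     (\<forall>a b c.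
        \<epsilon> (m (m a b) c) = eps_eps \<epsilon> (tmult m m (tmult m m (tens a u) (\<Delta> b)) (tens u c)) \<and>
        \<epsilon> (m (m a b) c) = eps_eps \<epsilon> (tmult m m (tmult m m (tens a u) (tw (\<Delta> b))) (tens u c)))"

text \<open>A multiplier is a pair (lambda, rho) of linear maps; lambda is left
multiplication by the multiplier, rho right multiplication.\<close>

type_synonym ('a, 'k) mult = "(('a \<Rightarrow>\<^sub>0 'k) \<Rightarrow> ('a \<Rightarrow>\<^sub>0 'k)) \<times> (('a \<Rightarrow>\<^sub>0 'k) \<Rightarrow> ('a \<Rightarrow>\<^sub>0 'k))"

definition multipliers :: "(('a \<Rightarrow>\<^sub>0 'k::field) \<Rightarrow> ('a \<Rightarrow>\<^sub>0 'k) \<Rightarrow> ('a \<Rightarrow>\<^sub>0 'k)) \<Rightarrow> ('a, 'k) mult set" where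
  "multipliers m = {(l, r). klinear l \<and> klinear r \<and> (\<forall>a b. m a (l b) = m (r a) b)}"

definition iota :: "(('a \<Rightarrow>\<^sub>0 'k::field) \<Rightarrow> ('a \<Rightarrow>\<^sub>0 'k) \<Rightarrow> ('a \<Rightarrow>\<^sub>0 'k)) \<Rightarrow> ('a \<Rightarrow>\<^sub>0 'k) \<Rightarrow> ('a, 'k) mult" where
  "iota m x = (m x, \<lambda>y. m y x)"

definition mmul :: "('a, 'k::field) mult \<Rightarrow> ('a, 'k) mult \<Rightarrow> ('a, 'k) mult" where
  "mmul w w' = (fst w \<circ> fst w', snd w' \<circ> snd w)"

definition munit :: "('a, 'k::field) mult" where
  "munit = (id, id)"

definition madd :: "('a, 'k::field) mult \<Rightarrow> ('a, 'k) mult \<Rightarrow> ('a, 'k) mult" where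
  "madd w w' = (\<lambda>x. fst w x + fst w' x, \<lambda>x. snd w x + snd w' x)"

definition msc :: "'k::field \<Rightarrow> ('a, 'k) mult \<Rightarrow> ('a, 'k) mult" where
  "msc c w = (\<lambda>x. sc c (fst w x), \<lambda>x. sc c (snd w x))"

definition mlext :: "('c \<Rightarrow> ('a, 'k::field) mult) \<Rightarrow> ('c \<Rightarrow>\<^sub>0 'k) \<Rightarrow> ('a, 'k) mult" where
  "mlext f x = (\<lambda>y. \<Sum>p\<in>Poly_Mapping.keys x. sc (Poly_Mapping.lookup x p) (fst (f p) y),
                \<lambda>y. \<Sum>p\<in>Poly_Mapping.keys x. sc (Poly_Mapping.lookup x p) (snd (f p) y))"

definition one_tens :: "(('a \<Rightarrow>\<^sub>0 'k::field) \<Rightarrow> ('a \<Rightarrow>\<^sub>0 'k) \<Rightarrow> ('a \<Rightarrow>\<^sub>0 'k)) \<Rightarrow> ('a \<Rightarrow>\<^sub>0 'k) \<Rightarrow> ('a \<times> 'a, 'k) mult" where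
  "one_tens m b = (tmap id (m b), tmap id (\<lambda>y. m y b))"

definition tens_one :: "(('a \<Rightarrow>\<^sub>0 'k::field) \<Rightarrow> ('a \<Rightarrow>\<^sub>0 'k) \<Rightarrow> ('a \<Rightarrow>\<^sub>0 'k)) \<Rightarrow> ('a \<Rightarrow>\<^sub>0 'k) \<Rightarrow> ('a \<times> 'a, 'k) mult" where
  "tens_one m a = (tmap (m a) id, tmap (\<lambda>y. m y a) id)"

definition T1 :: "(('a \<Rightarrow>\<^sub>0 'k::field) \<Rightarrow> ('a \<Rightarrow>\<^sub>0 'k) \<Rightarrow> ('a \<Rightarrow>\<^sub>0 'k)) \<Rightarrow> (('a \<Rightarrow>\<^sub>0 'k) \<Rightarrow> ('a \<times> 'a, 'k) mult)
    \<Rightarrow> ('a \<times> 'a \<Rightarrow>\<^sub>0 'k) \<Rightarrow> ('a \<times> 'a \<Rightarrow>\<^sub>0 'k)" where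
  "T1 m D = lext (\<lambda>p. THE t. iota (tmult m m) t = mmul (D (bv (fst p))) (one_tens m (bv (snd p))))"

definition T2 :: "(('a \<Rightarrow>\<^sub>0 'k::field) \<Rightarrow> ('a \<Rightarrow>\<^sub>0 'k) \<Rightarrow> ('a \<Rightarrow>\<^sub>0 'k)) \<Rightarrow> (('a \<Rightarrow>\<^sub>0 'k) \<Rightarrow> ('a \<times> 'a, 'k) mult)
    \<Rightarrow> ('a \<times> 'a \<Rightarrow>\<^sub>0 'k) \<Rightarrow> ('a \<times> 'a \<Rightarrow>\<^sub>0 'k)" where
  "T2 m D = lext (\<lambda>p. THE t. iota (tmult m m) t = mmul (tens_one m (bv (fst p))) (D (bv (snd p))))"

definition id_Delta :: "(('a \<Rightarrow>\<^sub>0 'k::field) \<Rightarrow> ('a \<Rightarrow>\<^sub>0 'k) \<Rightarrow> ('a \<Rightarrow>\<^sub>0 'k)) \<Rightarrow> (('a \<Rightarrow>\<^sub>0 'k) \<Rightarrow> ('a \<times> 'a, 'k) mult)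
    \<Rightarrow> ('a \<times> 'a \<Rightarrow>\<^sub>0 'k) \<Rightarrow> ('a \<times> 'a \<times> 'a, 'k) mult" where
  "id_Delta m D = mlext (\<lambda>p. (tmap (m (bv (fst p))) (fst (D (bv (snd p)))),
                               tmap (\<lambda>y. m y (bv (fst p))) (snd (D (bv (snd p))))))"

definition Delta_id :: "(('a \<Rightarrow>\<^sub>0 'k::field) \<Rightarrow> ('a \<Rightarrow>\<^sub>0 'k) \<Rightarrow> ('a \<Rightarrow>\<^sub>0 'k)) \<Rightarrow> (('a \<Rightarrow>\<^sub>0 'k) \<Rightarrow> ('a \<times> 'a, 'k) mult)
    \<Rightarrow> ('a \<times> 'a \<Rightarrow>\<^sub>0 'k) \<Rightarrow> ('a \<times> 'a \<times> 'a, 'k) mult" where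
  "Delta_id m D = mlext (\<lambda>p. (assocr \<circ> tmap (fst (D (bv (fst p)))) (m (bv (snd p))) \<circ> assocl,
                               assocr \<circ> tmap (snd (D (bv (fst p)))) (\<lambda>y. m y (bv (snd p))) \<circ> assocl))"

definition E_tens_one :: "('a \<times> 'a, 'k::field) mult \<Rightarrow> ('a \<times> 'a \<times> 'a, 'k) mult" where
  "E_tens_one E = (assocr \<circ> tmap (fst E) id \<circ> assocl, assocr \<circ> tmap (snd E) id \<circ> assocl)"

definition one_tens_E :: "('a \<times> 'a, 'k::field) mult \<Rightarrow> ('a \<times> 'a \<times> 'a, 'k) mult" where
  "one_tens_E E = (tmap id (fst E), tmap id (snd E))"

definition is_mult_ext :: "(('a \<Rightarrow>\<^sub>0 'k::field) \<Rightarrow> ('a \<Rightarrow>\<^sub>0 'k) \<Rightarrow> ('a \<Rightarrow>\<^sub>0 'k))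
    \<Rightarrow> (('a \<times> 'a, 'k) mult \<Rightarrow> ('a \<times> 'a \<times> 'a, 'k) mult)
    \<Rightarrow> (('a \<times> 'a \<Rightarrow>\<^sub>0 'k) \<Rightarrow> ('a \<times> 'a \<times> 'a, 'k) mult) \<Rightarrow> ('a \<times> 'a \<times> 'a, 'k) mult \<Rightarrow> bool" where
  "is_mult_ext m \<Phi> \<phi> e \<longleftrightarrow>
     (\<forall>w\<in>multipliers (tmult m m). \<Phi> w \<in> multipliers (tmult m (tmult m m))) \<and>
     (\<forall>w\<in>multipliers (tmult m m). \<forall>w'\<in>multipliers (tmult m m). \<Phi> (mmul w w') = mmul (\<Phi> w) (\<Phi> w')) \<and>
     (\<forall>x. \<Phi> (iota (tmult m m) x) = \<phi> x) \<and>
     \<Phi> munit = e"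

definition weak_multiplier_bialgebra ::
  "(('a \<Rightarrow>\<^sub>0 'k::field) \<Rightarrow> ('a \<Rightarrow>\<^sub>0 'k) \<Rightarrow> ('a \<Rightarrow>\<^sub>0 'k)) \<Rightarrow> ('a \<times> 'a, 'k) mult
   \<Rightarrow> (('a \<Rightarrow>\<^sub>0 'k) \<Rightarrow> ('a \<times> 'a, 'k) mult) \<Rightarrow> (('a \<Rightarrow>\<^sub>0 'k) \<Rightarrow> 'k) \<Rightarrow> bool" where
  "weak_multiplier_bialgebra m E D \<epsilon> \<longleftrightarrow>
     kalgebra m \<and>
     \<comment> \<open>idempotent: mu surjective\<close>
     (\<forall>a. \<exists>t. mu m t = a) \<and>
     \<comment> \<open>non-degenerate multiplication\<close>
     (\<forall>b. (\<forall>a. m a b = 0) \<longrightarrow> b = 0) \<and> (\<forall>b. (\<forall>a. m b a = 0) \<longrightarrow> b = 0) \<and>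
     \<comment> \<open>E idempotent multiplier\<close>
     E \<in> multipliers (tmult m m) \<and> mmul E E = E \<and>
     \<comment> \<open>Delta : A -> M(A (x) A) linear and multiplicative, epsilon linear\<close>
     (\<forall>a. D a \<in> multipliers (tmult m m)) \<and>
     (\<forall>a b. D (a + b) = madd (D a) (D b)) \<and> (\<forall>c a. D (sc c a) = msc c (D a)) \<and>
     (\<forall>a b. D (m a b) = mmul (D a) (D b)) \<and>
     kfunctional \<epsilon> \<and>
     \<comment> \<open>(i)\<close>
     (\<forall>a b. (\<exists>t. iota (tmult m m) t = mmul (D a) (one_tens m b)) \<and>
            (\<exists>t. iota (tmult m m) t = mmul (tens_one m a) (D b))) \<and>
     \<comment> \<open>(ii)\<close>
     (\<forall>x. (assocr \<circ> tmap (T2 m D) id \<circ> assocl) (tmap id (T1 m D) x) =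
          tmap id (T1 m D) ((assocr \<circ> tmap (T2 m D) id \<circ> assocl) x)) \<and>
     \<comment> \<open>(iii)\<close>
     (\<forall>x. eps_id \<epsilon> (T1 m D x) = mu m x \<and> id_eps \<epsilon> (T2 m D x) = mu m x) \<and>
     \<comment> \<open>(iv)\<close>
     kspan {fst (D a) (tens b b') | a b b'. True} = kspan {fst E (tens b b') | b b'. True} \<and>
     kspan {snd (D a) (tens b b') | a b b'. True} = kspan {snd E (tens b b') | b b'. True} \<and>
     \<comment> \<open>(v)\<close>
     (\<exists>\<Phi>. is_mult_ext m \<Phi> (id_Delta m D) (one_tens_E E)) \<and>
     (\<exists>\<Psi>. is_mult_ext m \<Psi> (Delta_id m D) (E_tens_one E)) \<and>
     (\<forall>\<Phi> \<Psi>. is_mult_ext m \<Phi> (id_Delta m D) (one_tens_E E) \<longrightarrow>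
             is_mult_ext m \<Psi> (Delta_id m D) (E_tens_one E) \<longrightarrow>
             \<Phi> E = \<Psi> E \<and>
             mmul (E_tens_one E) (one_tens_E E) = \<Phi> E \<and>
             mmul (one_tens_E E) (E_tens_one E) = \<Phi> E) \<and>
     \<comment> \<open>(vi)\<close>
     (\<forall>a b c.
        eps_id \<epsilon> (tmap id (m a) (fst E (tens b c))) = eps_id \<epsilon> (fst (D a) (tens b c)) \<and>
        eps_id \<epsilon> (tmap id (\<lambda>y. m y c) (snd E (tens a b))) = eps_id \<epsilon> (snd (D c) (tens a b)))"

end

theory Submission
  imports Defs
begin


lemma lookup_sc[simp]: "Poly_Mapping.lookup (sc c x) i = c * Poly_Mapping.lookup x i"
  by (simp add: sc_def Poly_Mapping.map.rep_eq when_def)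

lemma lookup_bv: "Poly_Mapping.lookup (bv i) j = (if i = j then 1 else 0)"
  by (simp add: bv_def lookup_single)

lemma keys_bv[simp]: "Poly_Mapping.keys (bv i :: _ \<Rightarrow>\<^sub>0 'k::field) = {i}"
  by (simp add: bv_def)

lemma lookup_tens[simp]: "Poly_Mapping.lookup (tens x y) p = Poly_Mapping.lookup x (fst p) * Poly_Mapping.lookup y (snd p)"
  by (simp add: tens.rep_eq)

lemma sc_add_right: "sc c (x + y) = sc c x + sc c y"
  by (rule poly_mapping_eqI) (simp add: lookup_add algebra_simps)
lemma sc_add_left: "sc (c + d) x = sc c x + sc d x"
  by (rule poly_mapping_eqI) (simp add: lookup_add algebra_simps)
lemma sc_sc: "sc c (sc d x) = sc (c * d) x"
  by (rule poly_mapping_eqI) (simp add: algebra_simps)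
lemma sc_one[simp]: "sc 1 x = x"
  by (rule poly_mapping_eqI) simp
lemma sc_zero[simp]: "sc 0 x = 0"
  by (rule poly_mapping_eqI) simp
lemma sc_zero_right[simp]: "sc c 0 = 0"
  by (rule poly_mapping_eqI) simp
lemma sc_sum: "sc c (sum f S) = (\<Sum>s\<in>S. sc c (f s))"
  by (induct S rule: infinite_finite_induct) (auto simp: sc_add_right)
lemma sum_sc: "sc (sum f S) x = (\<Sum>s\<in>S. sc (f s) x)"
  by (induct S rule: infinite_finite_induct) (auto simp: sc_add_left)
lemma sc_uminus: "sc (-c) x = - sc c x"
  by (rule poly_mapping_eqI) (simp)
lemma sc_minus_one: "sc (-1) x = - x"
  by (rule poly_mapping_eqI) (simp)

lemma klinearI:
  assumes "\<And>x y. f (x + y) = f x + f y" "\<And>c x. f (sc c x) = sc c (f x)"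
  shows "klinear f"
  using assms unfolding klinear_def by blast

lemma klinear_add: "klinear f \<Longrightarrow> f (x + y) = f x + f y"
  unfolding klinear_def by blast
lemma klinear_sc: "klinear f \<Longrightarrow> f (sc c x) = sc c (f x)"
  unfolding klinear_def by blast
lemma klinear_zero: "klinear f \<Longrightarrow> f 0 = 0"
  using klinear_sc[of f 0 0] by simp
lemma klinear_sum: "klinear f \<Longrightarrow> f (sum g S) = (\<Sum>s\<in>S. f (g s))"
  by (induct S rule: infinite_finite_induct) (auto simp: klinear_add klinear_zero)
lemma klinear_uminus: "klinear f \<Longrightarrow> f (- x) = - f x"
  using klinear_sc[of f "-1" x] by (simp add: sc_minus_one)
lemma klinear_diff: "klinear f \<Longrightarrow> f (x - y) = f x - f y"
  using klinear_add[of f x "-y"] klinear_uminus[of f y] by simp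

lemma kfunctional_add: "kfunctional f \<Longrightarrow> f (x + y) = f x + f y"
  unfolding kfunctional_def by blast
lemma kfunctional_sc: "kfunctional f \<Longrightarrow> f (sc c x) = c * f x"
  unfolding kfunctional_def by blast
lemma kfunctional_zero: "kfunctional f \<Longrightarrow> f 0 = 0"
  using kfunctional_sc[of f 0 0] by simp
lemma kfunctional_sum: "kfunctional f \<Longrightarrow> f (sum g S) = (\<Sum>s\<in>S. f (g s))"
  by (induct S rule: infinite_finite_induct) (auto simp: kfunctional_add kfunctional_zero)

lemma klinear_id[simp]: "klinear id" and klinear_id'[simp]: "klinear (\<lambda>x. x)"
  by (auto intro: klinearI)

lemma klinear_comp: "klinear f \<Longrightarrow> klinear g \<Longrightarrow> klinear (f \<circ> g)"
  by (auto intro!: klinearI simp: klinear_add klinear_sc)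

lemma klinear_comp': "klinear f \<Longrightarrow> klinear g \<Longrightarrow> klinear (\<lambda>x. f (g x))"
  by (auto intro!: klinearI simp: klinear_add klinear_sc)

lemma klinear_plus: "klinear f \<Longrightarrow> klinear g \<Longrightarrow> klinear (\<lambda>x. f x + g x)"
  by (auto intro!: klinearI simp: klinear_add klinear_sc sc_add_right)

lemma klinear_sumf: "(\<And>s. s \<in> S \<Longrightarrow> klinear (f s)) \<Longrightarrow> klinear (\<lambda>x. \<Sum>s\<in>S. f s x)"
  by (auto intro!: klinearI simp: klinear_add klinear_sc sum.distrib sc_sum)

lemma klinear_sc_fun: "klinear f \<Longrightarrow> klinear (\<lambda>x. sc c (f x))"
  by (auto intro!: klinearI simp: klinear_add klinear_sc sc_add_right sc_sc mult.commute)

lemma decomp_gen: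
  assumes "finite S" "Poly_Mapping.keys x \<subseteq> S"
  shows "x = (\<Sum>p\<in>S. sc (Poly_Mapping.lookup x p) (bv p))"
proof (rule poly_mapping_eqI)
  fix k
  have "Poly_Mapping.lookup (\<Sum>p\<in>S. sc (Poly_Mapping.lookup x p) (bv p)) k
      = (\<Sum>p\<in>S. Poly_Mapping.lookup x p * (if p = k then 1 else 0))"
    by (simp add: lookup_sum lookup_bv)
  also have "\<dots> = (if k \<in> S then Poly_Mapping.lookup x k else 0)"
    using assms(1) by (simp add: if_distrib sum.delta cong: if_cong)
  also have "\<dots> = Poly_Mapping.lookup x k"
    using assms(2) by (auto simp: in_keys_iff)
  finally show "Poly_Mapping.lookup x k = Poly_Mapping.lookup (\<Sum>p\<in>S. sc (Poly_Mapping.lookup x p) (bv p)) k" by simp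
qed

lemma decomp: "x = (\<Sum>p\<in>Poly_Mapping.keys x. sc (Poly_Mapping.lookup x p) (bv p))"
  by (rule decomp_gen) auto

lemma lext_gen:
  assumes "finite S" "Poly_Mapping.keys x \<subseteq> S"
  shows "lext f x = (\<Sum>p\<in>S. sc (Poly_Mapping.lookup x p) (f p))"
  unfolding lext_def
  by (rule sum.mono_neutral_left) (use assms in \<open>auto simp: in_keys_iff\<close>)

lemma keys_add_sub: "Poly_Mapping.keys (x + y) \<subseteq> Poly_Mapping.keys x \<union> Poly_Mapping.keys y"
  by (auto simp: in_keys_iff lookup_add)

lemma keys_sc_sub: "Poly_Mapping.keys (sc c x) \<subseteq> Poly_Mapping.keys x"
  by (auto simp: in_keys_iff)

lemma klinear_lext[simp]: "klinear (lext f :: ('a \<Rightarrow>\<^sub>0 'k::field) \<Rightarrow> _)"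
proof (rule klinearI)
  fix x y :: "'a \<Rightarrow>\<^sub>0 'k"
  let ?S = "Poly_Mapping.keys x \<union> Poly_Mapping.keys y"
  have "lext f (x + y) = (\<Sum>p\<in>?S. sc (Poly_Mapping.lookup (x+y) p) (f p))"
    by (rule lext_gen) (auto dest: keys_add_sub[THEN subsetD])
  also have "\<dots> = (\<Sum>p\<in>?S. sc (Poly_Mapping.lookup x p) (f p)) + (\<Sum>p\<in>?S. sc (Poly_Mapping.lookup y p) (f p))"
    by (simp add: lookup_add sc_add_left sum.distrib)
  also have "\<dots> = lext f x + lext f y"
    by (subst (1 2) lext_gen[of ?S]) auto
  finally show "lext f (x + y) = lext f x + lext f y" .
next
  fix c and x :: "'a \<Rightarrow>\<^sub>0 'k"
  have "lext f (sc c x) = (\<Sum>p\<in>Poly_Mapping.keys x. sc (Poly_Mapping.lookup (sc c x) p) (f p))"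
    by (rule lext_gen) (auto dest: keys_sc_sub[THEN subsetD])
  also have "\<dots> = sc c (lext f x)"
    by (simp add: lext_def sc_sum sc_sc)
  finally show "lext f (sc c x) = sc c (lext f x)" .
qed

lemma lext_bv[simp]: "lext f (bv p) = f p"
  by (simp add: lext_def lookup_bv)

lemma lin_rep: "klinear g \<Longrightarrow> g x = lext (\<lambda>p. g (bv p)) x"
  apply (subst (1) decomp[of x])
  apply (simp add: klinear_sum klinear_sc lext_def)
  done

lemma lin_ext:
  assumes "klinear f" "klinear g" "\<And>p. f (bv p) = g (bv p)"
  shows "f x = g x"
  using lin_rep[OF assms(1), of x] lin_rep[OF assms(2), of x] assms(3) by simp

lemma lin_ext_fun:
  assumes "klinear f" "klinear g" "\<And>p. f (bv p) = g (bv p)"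
  shows "f = g"
  using lin_ext[OF assms] by blast

lemma lin_rep_fun: "klinear g \<Longrightarrow> lext (\<lambda>p. g (bv p)) = g"
  using lin_rep by (metis ext)

lemma lextk_gen:
  assumes "finite S" "Poly_Mapping.keys x \<subseteq> S"
  shows "lextk f x = (\<Sum>p\<in>S. Poly_Mapping.lookup x p * f p)"
  unfolding lextk_def
  by (rule sum.mono_neutral_left) (use assms in \<open>auto simp: in_keys_iff\<close>)

lemma kfunctional_lextk[simp]: "kfunctional (lextk f :: ('a \<Rightarrow>\<^sub>0 'k::field) \<Rightarrow> _)"
  unfolding kfunctional_def
proof safe
  fix x y :: "'a \<Rightarrow>\<^sub>0 'k"
  let ?S = "Poly_Mapping.keys x \<union> Poly_Mapping.keys y"
  have "lextk f (x + y) = (\<Sum>p\<in>?S. Poly_Mapping.lookup (x+y) p * f p)"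
    by (rule lextk_gen) (auto dest: keys_add_sub[THEN subsetD])
  also have "\<dots> = lextk f x + lextk f y"
    by (subst (1 2) lextk_gen[of ?S]) (auto simp: lookup_add algebra_simps sum.distrib)
  finally show "lextk f (x + y) = lextk f x + lextk f y" .
next
  fix c and x :: "'a \<Rightarrow>\<^sub>0 'k"
  have "lextk f (sc c x) = (\<Sum>p\<in>Poly_Mapping.keys x. Poly_Mapping.lookup (sc c x) p * f p)"
    by (rule lextk_gen) (auto dest: keys_sc_sub[THEN subsetD])
  also have "\<dots> = c * lextk f x"
    by (simp add: lextk_def sum_distrib_left algebra_simps)
  finally show "lextk f (sc c x) = c * lextk f x" .
qed

lemma lextk_bv[simp]: "lextk f (bv p) = f p"
  by (simp add: lextk_def lookup_bv)

lemma fun_ext: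
  assumes "kfunctional f" "kfunctional g" "\<And>p. f (bv p) = g (bv p)"
  shows "f x = g x"
proof -
  have "f x = (\<Sum>p\<in>Poly_Mapping.keys x. Poly_Mapping.lookup x p * f (bv p))"
    by (subst decomp) (simp add: kfunctional_sum[OF assms(1)] kfunctional_sc[OF assms(1)])
  moreover have "g x = (\<Sum>p\<in>Poly_Mapping.keys x. Poly_Mapping.lookup x p * g (bv p))"
    by (subst decomp) (simp add: kfunctional_sum[OF assms(2)] kfunctional_sc[OF assms(2)])
  ultimately show ?thesis using assms(3) by simp
qed

lemma kfunctional_comp: "kfunctional f \<Longrightarrow> klinear g \<Longrightarrow> kfunctional (\<lambda>x. f (g x))"
  by (simp add: kfunctional_def klinear_add klinear_sc)

lemma tens_add_left: "tens (x + y) z = tens x z + tens y z"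
  by (rule poly_mapping_eqI) (simp add: lookup_add algebra_simps)
lemma tens_add_right: "tens z (x + y) = tens z x + tens z y"
  by (rule poly_mapping_eqI) (simp add: lookup_add algebra_simps)
lemma tens_sc_left: "tens (sc c x) y = sc c (tens x y)"
  by (rule poly_mapping_eqI) (simp add: algebra_simps)
lemma tens_sc_right: "tens x (sc c y) = sc c (tens x y)"
  by (rule poly_mapping_eqI) (simp add: algebra_simps)
lemma tens_bv: "tens (bv i) (bv j) = bv (i, j)"
  by (rule poly_mapping_eqI) (auto simp: lookup_bv)
lemma klinear_tens1[simp]: "klinear (tens x)"
  by (auto intro!: klinearI simp: tens_add_right tens_sc_right)
lemma klinear_tens2[simp]: "klinear (\<lambda>x. tens x y)"
  by (auto intro!: klinearI simp: tens_add_left tens_sc_left)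
lemma tens_zero_left[simp]: "tens 0 y = 0" and tens_zero_right[simp]: "tens x 0 = 0"
  by (rule poly_mapping_eqI, simp)+

lemma bv_pair: "bv p = tens (bv (fst p)) (bv (snd p))"
  by (simp add: tens_bv)

lemma tens_ext:
  assumes "klinear f" "klinear g" "\<And>x y. f (tens x y) = g (tens x y)"
  shows "f z = g z"
  by (rule lin_ext[OF assms(1,2)]) (metis bv_pair assms(3))

lemma tens_ext_fun:
  assumes "klinear f" "klinear g" "\<And>x y. f (tens x y) = g (tens x y)"
  shows "f = g"
  using tens_ext[OF assms] by blast

lemma tens3_ext:
  assumes "klinear f" "klinear g" "\<And>x y z. f (tens x (tens y z)) = g (tens x (tens y z))"
  shows "f w = g w"
  by (rule lin_ext[OF assms(1,2)]) (metis bv_pair assms(3))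

lemma tens3l_ext:
  assumes "klinear f" "klinear g" "\<And>x y z. f (tens (tens x y) z) = g (tens (tens x y) z)"
  shows "f w = g w"
  by (rule lin_ext[OF assms(1,2)]) (metis bv_pair assms(3))

lemma tensk_ext:
  assumes "kfunctional f" "kfunctional g" "\<And>x y. f (tens x y) = g (tens x y)"
  shows "f z = g z"
  by (rule fun_ext[OF assms(1,2)]) (metis bv_pair assms(3))

lemma bilin_ext:
  assumes "\<And>y. klinear (\<lambda>x. F x y)" "\<And>y. klinear (\<lambda>x. G x y)"
    "\<And>x. klinear (F x)" "\<And>x. klinear (G x)"
    "\<And>p q. F (bv p) (bv q) = G (bv p) (bv q)"
  shows "F x y = G x y"
proof -
  note assms
  have "F (bv p) y = G (bv p) y" for p
    by (rule lin_ext[OF assms(3,4)]) (rule assms(5))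
  then show ?thesis by (rule lin_ext[where f="\<lambda>x. F x y" and g="\<lambda>x. G x y", OF assms(1,2)])
qed



lemma trilin_ext:
  assumes "\<And>y z. klinear (\<lambda>x. F x y z)" "\<And>y z. klinear (\<lambda>x. G x y z)"
    "\<And>x z. klinear (\<lambda>y. F x y z)" "\<And>x z. klinear (\<lambda>y. G x y z)"
    "\<And>x y. klinear (F x y)" "\<And>x y. klinear (G x y)"
    "\<And>p q r. F (bv p) (bv q) (bv r) = G (bv p) (bv q) (bv r)"
  shows "F x y z = G x y z"
proof -
  have h: "F (bv p) (bv q) z = G (bv p) (bv q) z" for p q
    by (rule lin_ext[OF assms(5,6)]) (rule assms(7))
  show ?thesis
  proof (rule bilin_ext[where F="\<lambda>x y. F x y z" and G="\<lambda>x y. G x y z"])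
    show "klinear (\<lambda>x. F x y z)" for y by (rule assms(1))
    show "klinear (\<lambda>x. G x y z)" for y by (rule assms(2))
    show "klinear (\<lambda>y. F x y z)" for x by (rule assms(3))
    show "klinear (\<lambda>y. G x y z)" for x by (rule assms(4))
  qed (rule h)
qed

lemma tmap_tens:
  assumes "klinear f" "klinear g"
  shows "tmap f g (tens x y) = tens (f x) (g y)"
proof (rule bilin_ext[where F="\<lambda>x y. tmap f g (tens x y)" and G="\<lambda>x y. tens (f x) (g y)"])
  show "klinear (\<lambda>x. tmap f g (tens x y))" for y
    unfolding tmap_def by (rule klinear_comp'[OF klinear_lext klinear_tens2])
  show "klinear (\<lambda>x. tens (f x) (g y))" for y
    by (rule klinear_comp'[OF klinear_tens2 assms(1)])
  show "klinear (\<lambda>y. tmap f g (tens x y))" for x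
    unfolding tmap_def by (rule klinear_comp'[OF klinear_lext klinear_tens1])
  show "klinear (\<lambda>y. tens (f x) (g y))" for x
    by (rule klinear_comp'[OF klinear_tens1 assms(2)])
  show "tmap f g (tens (bv p) (bv q)) = tens (f (bv p)) (g (bv q))" for p q
    by (simp add: tmap_def tens_bv)
qed

lemma klinear_tmap[simp]: "klinear (tmap f g)"
  unfolding tmap_def by simp

lemma tmap_id_id: "tmap id id x = x"
  by (rule tens_ext[where f="tmap id id" and g="\<lambda>x. x"]) (auto simp: tmap_tens)

lemma tmap_id_id'[simp]: "tmap id id = id"
  using tmap_id_id by fastforce

lemma tmap_comp:
  assumes "klinear f" "klinear g" "klinear f'" "klinear g'"
  shows "tmap f g (tmap f' g' x) = tmap (\<lambda>y. f (f' y)) (\<lambda>y. g (g' y)) x"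
  by (rule tens_ext[where f="\<lambda>x. tmap f g (tmap f' g' x)"])
     (simp_all add: tmap_tens assms klinear_comp'[OF klinear_tmap klinear_tmap] klinear_comp'[OF assms(1,3)] klinear_comp'[OF assms(2,4)])

lemma klinear_tmult1[simp]: "klinear (\<lambda>x. tmult mX mY x y)"
  unfolding tmult_def by simp

lemma klinear_lext_param: "(\<And>p. klinear (F p)) \<Longrightarrow> klinear (\<lambda>y. lext (\<lambda>p. F p y) x)"
  unfolding lext_def[of _ x] by (intro klinear_sumf klinear_sc_fun) auto

lemma klinear_tmult2[simp]: "klinear (tmult mX mY x)"
  unfolding tmult_def
  by (rule klinear_lext_param) simp

lemma tmult_bv: "tmult mX mY (bv p) (bv q) =
   tens (mX (bv (fst p)) (bv (fst q))) (mY (bv (snd p)) (bv (snd q)))"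
  by (simp add: tmult_def)

lemma kbilinearD1: "kbilinear m \<Longrightarrow> klinear (m a)"
  and kbilinearD2: "kbilinear m \<Longrightarrow> klinear (\<lambda>a. m a b)"
  unfolding kbilinear_def by auto

lemma tmult_tens:
  assumes X: "kbilinear mX" and Y: "kbilinear mY"
  shows "tmult mX mY (tens a b) (tens c d) = tens (mX a c) (mY b d)"
proof -
  have base: "tmult mX mY (tens (bv i) (bv j)) (tens c d) = tens (mX (bv i) c) (mY (bv j) d)" for i j
  proof (rule bilin_ext[where F="\<lambda>c d. tmult mX mY (tens (bv i) (bv j)) (tens c d)"
                        and G="\<lambda>c d. tens (mX (bv i) c) (mY (bv j) d)"])
    show "klinear (\<lambda>c. tmult mX mY (tens (bv i) (bv j)) (tens c d))" for d
      by (rule klinear_comp'[OF klinear_tmult2 klinear_tens2])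
    show "klinear (\<lambda>c. tens (mX (bv i) c) (mY (bv j) d))" for d
      by (rule klinear_comp'[OF klinear_tens2 kbilinearD1[OF X]])
    show "klinear (\<lambda>d. tmult mX mY (tens (bv i) (bv j)) (tens c d))" for c
      by (rule klinear_comp'[OF klinear_tmult2 klinear_tens1])
    show "klinear (\<lambda>d. tens (mX (bv i) c) (mY (bv j) d))" for c
      by (rule klinear_comp'[OF klinear_tens1 kbilinearD1[OF Y]])
    show "tmult mX mY (tens (bv i) (bv j)) (tens (bv p) (bv q)) = tens (mX (bv i) (bv p)) (mY (bv j) (bv q))" for p q
      by (simp add: tens_bv tmult_bv)
  qed
  show ?thesis
  proof (rule bilin_ext[where F="\<lambda>a b. tmult mX mY (tens a b) (tens c d)"
                        and G="\<lambda>a b. tens (mX a c) (mY b d)"])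
    show "klinear (\<lambda>a. tmult mX mY (tens a b) (tens c d))" for b
      by (rule klinear_comp'[OF klinear_tmult1 klinear_tens2])
    show "klinear (\<lambda>a. tens (mX a c) (mY b d))" for b
      by (rule klinear_comp'[OF klinear_tens2 kbilinearD2[OF X]])
    show "klinear (\<lambda>b. tmult mX mY (tens a b) (tens c d))" for a
      by (rule klinear_comp'[OF klinear_tmult1 klinear_tens1])
    show "klinear (\<lambda>b. tens (mX a c) (mY b d))" for a
      by (rule klinear_comp'[OF klinear_tens1 kbilinearD2[OF Y]])
  qed (rule base)
qed

lemma kbilinear_tmult[simp]: "kbilinear (tmult mX mY)"
  unfolding kbilinear_def by simp

lemma kalgebraD: "kalgebra m \<Longrightarrow> kbilinear m" "kalgebra m \<Longrightarrow> m (m a b) c = m a (m b c)"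
  unfolding kalgebra_def by auto

lemma tmult_assoc:
  assumes X: "kalgebra mX" and Y: "kalgebra mY"
  shows "tmult mX mY (tmult mX mY x y) z = tmult mX mY x (tmult mX mY y z)"
proof -
  let ?T = "tmult mX mY"
  have bX: "kbilinear mX" and bY: "kbilinear mY" using X Y by (auto dest: kalgebraD)
  have e: "?T (?T (tens a b) (tens c d)) (tens e f) = ?T (tens a b) (?T (tens c d) (tens e f))" for a b c d e f
    by (simp add: tmult_tens[OF bX bY] kalgebraD(2)[OF X] kalgebraD(2)[OF Y])
  have e2: "?T (?T x (tens c d)) (tens e f) = ?T x (?T (tens c d) (tens e f))" for x c d e f
    by (rule tens_ext[where f="\<lambda>x. ?T (?T x (tens c d)) (tens e f)" and g="\<lambda>x. ?T x (?T (tens c d) (tens e f))"])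
       (auto intro: klinear_comp'[OF klinear_tmult1 klinear_tmult1] simp: e)
  have e3: "?T (?T x y) (tens e f) = ?T x (?T y (tens e f))" for x y e f
    by (rule tens_ext[where f="\<lambda>y. ?T (?T x y) (tens e f)" and g="\<lambda>y. ?T x (?T y (tens e f))"])
       (auto intro: klinear_comp'[OF klinear_tmult1 klinear_tmult2] klinear_comp'[OF klinear_tmult2 klinear_tmult1] simp: e2)
  show ?thesis
    by (rule tens_ext[where f="\<lambda>z. ?T (?T x y) z" and g="\<lambda>z. ?T x (?T y z)"])
       (auto intro: klinear_comp'[OF klinear_tmult2 klinear_tmult2] simp: e3)
qed

lemma kalgebra_tmult: "kalgebra mX \<Longrightarrow> kalgebra mY \<Longrightarrow> kalgebra (tmult mX mY)"
  unfolding kalgebra_def[of "tmult mX mY"] using tmult_assoc by auto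

lemma unital_tmult:
  assumes "unital_algebra mX uX" "unital_algebra mY uY"
  shows "unital_algebra (tmult mX mY) (tens uX uY)"
proof -
  have A: "kalgebra mX" "kalgebra mY" and U: "\<And>a. mX uX a = a" "\<And>a. mX a uX = a" "\<And>a. mY uY a = a" "\<And>a. mY a uY = a"
    using assms unfolding unital_algebra_def by auto
  have bX: "kbilinear mX" and bY: "kbilinear mY" using A by (auto dest: kalgebraD)
  have "tmult mX mY (tens uX uY) x = x" for x
    by (rule tens_ext[where f="tmult mX mY (tens uX uY)" and g="\<lambda>x. x"]) (auto simp: tmult_tens[OF bX bY] U)
  moreover have "tmult mX mY x (tens uX uY) = x" for x
    by (rule tens_ext[where f="\<lambda>x. tmult mX mY x (tens uX uY)" and g="\<lambda>x. x"]) (auto simp: tmult_tens[OF bX bY] U)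
  ultimately show ?thesis using kalgebra_tmult[OF A] unfolding unital_algebra_def by auto
qed

lemma klinear_assocr[simp]: "klinear assocr" unfolding assocr_def by simp
lemma klinear_assocl[simp]: "klinear assocl" unfolding assocl_def by simp
lemma klinear_tw[simp]: "klinear tw" unfolding tw_def by simp

lemma lin_t1: "klinear f \<Longrightarrow> klinear (\<lambda>x. f (tens x y))"
  by (rule klinear_comp'[OF _ klinear_tens2])
lemma lin_t2: "klinear f \<Longrightarrow> klinear (\<lambda>y. f (tens x y))"
  by (rule klinear_comp'[OF _ klinear_tens1])

lemma assocr_bv: "assocr (bv p) = bv (fst (fst p), snd (fst p), snd p)"
  by (simp add: assocr_def)
lemma assocl_bv: "assocl (bv p) = bv ((fst p, fst (snd p)), snd (snd p))"
  by (simp add: assocl_def)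
lemma tw_bv: "tw (bv p) = bv (snd p, fst p)"
  by (simp add: tw_def)

lemma assocr_tens: "assocr (tens (tens a b) c) = tens a (tens b c)"
  by (rule trilin_ext[where F="\<lambda>a b c. assocr (tens (tens a b) c)" and G="\<lambda>a b c. tens a (tens b c)"])
     (intro lin_t1 lin_t2 klinear_assocr klinear_tens1 klinear_tens2 klinear_id'
      | simp add: tens_bv assocr_bv)+

lemma assocl_tens: "assocl (tens a (tens b c)) = tens (tens a b) c"
  by (rule trilin_ext[where F="\<lambda>a b c. assocl (tens a (tens b c))" and G="\<lambda>a b c. tens (tens a b) c"])
     (intro lin_t1 lin_t2 klinear_assocl klinear_tens1 klinear_tens2 klinear_id'
      | simp add: tens_bv assocl_bv)+

lemma assocr_assocl[simp]: "assocr (assocl x) = x"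
  by (rule tens3_ext[where f="\<lambda>x. assocr (assocl x)" and g="\<lambda>x. x"]) (simp_all add: klinear_comp'[OF klinear_assocr klinear_assocl] assocl_tens assocr_tens)

lemma assocl_assocr[simp]: "assocl (assocr x) = x"
  by (rule tens3l_ext[where f="\<lambda>x. assocl (assocr x)" and g="\<lambda>x. x"]) (simp_all add: klinear_comp'[OF klinear_assocl klinear_assocr] assocl_tens assocr_tens)

lemma tw_tens: "tw (tens a b) = tens b a"
  by (rule bilin_ext[where F="\<lambda>a b. tw (tens a b)" and G="\<lambda>a b. tens b a"])
     (intro lin_t1 lin_t2 klinear_tw klinear_tens1 klinear_tens2 klinear_id'
      | simp add: tens_bv tw_bv)+

lemma klinear_eps_id[simp]: "klinear (eps_id e)" unfolding eps_id_def by simp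
lemma klinear_id_eps[simp]: "klinear (id_eps e)" unfolding id_eps_def by simp
lemma kfunctional_eps_eps[simp]: "kfunctional (eps_eps e)" unfolding eps_eps_def by simp
lemma klinear_mu[simp]: "klinear (mu m)" unfolding mu_def by simp

lemma klinear_sc_arg: "kfunctional e \<Longrightarrow> klinear (\<lambda>a. sc (e a) b)"
  by (auto intro!: klinearI simp: kfunctional_add kfunctional_sc sc_add_left sc_sc)

lemma eps_id_bv: "eps_id e (bv p) = sc (e (bv (fst p))) (bv (snd p))" by (simp add: eps_id_def)
lemma id_eps_bv: "id_eps e (bv p) = sc (e (bv (snd p))) (bv (fst p))" by (simp add: id_eps_def)
lemma mu_bv: "mu m (bv p) = m (bv (fst p)) (bv (snd p))" by (simp add: mu_def)
lemma eps_eps_bv: "eps_eps e (bv p) = e (bv (fst p)) * e (bv (snd p))" by (simp add: eps_eps_def)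

lemma eps_id_tens: "kfunctional e \<Longrightarrow> eps_id e (tens a b) = sc (e a) b"
  by (rule bilin_ext[where F="\<lambda>a b. eps_id e (tens a b)" and G="\<lambda>a b. sc (e a) b"])
     (intro lin_t1 lin_t2 klinear_eps_id klinear_sc_arg klinear_sc_fun klinear_id' | simp add: tens_bv eps_id_bv)+

lemma id_eps_tens: "kfunctional e \<Longrightarrow> id_eps e (tens a b) = sc (e b) a"
  by (rule bilin_ext[where F="\<lambda>a b. id_eps e (tens a b)" and G="\<lambda>a b. sc (e b) a"])
     (intro lin_t1 lin_t2 klinear_id_eps klinear_sc_arg klinear_sc_fun klinear_id' | simp add: tens_bv id_eps_bv)+

lemma mu_tens: "kbilinear m \<Longrightarrow> mu m (tens a b) = m a b"
  by (rule bilin_ext[where F="\<lambda>a b. mu m (tens a b)" and G="\<lambda>a b. m a b"])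
     (intro lin_t1 lin_t2 klinear_mu kbilinearD1 kbilinearD2 | simp add: tens_bv mu_bv)+

lemma kfun_mult_left: "kfunctional f \<Longrightarrow> kfunctional (\<lambda>x. f x * c)"
  unfolding kfunctional_def by (simp add: algebra_simps)
lemma kfun_mult_right: "kfunctional f \<Longrightarrow> kfunctional (\<lambda>x. c * f x)"
  unfolding kfunctional_def by (simp add: algebra_simps)

lemma eps_eps_tens:
  assumes "kfunctional e"
  shows "eps_eps e (tens a b) = e a * e b"
proof -
  have h: "eps_eps e (tens a (bv q)) = e a * e (bv q)" for q
  proof (rule fun_ext[where f="\<lambda>a. eps_eps e (tens a (bv q))" and g="\<lambda>a. e a * e (bv q)"])
    show "kfunctional (\<lambda>a. eps_eps e (tens a (bv q)))"
      by (rule kfunctional_comp[OF kfunctional_eps_eps klinear_tens2])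
    show "kfunctional (\<lambda>a. e a * e (bv q))" by (rule kfun_mult_left[OF assms])
    show "eps_eps e (tens (bv p) (bv q)) = e (bv p) * e (bv q)" for p
      by (simp add: tens_bv eps_eps_bv)
  qed
  show ?thesis
  proof (rule fun_ext[where f="\<lambda>b. eps_eps e (tens a b)" and g="\<lambda>b. e a * e b"])
    show "kfunctional (\<lambda>b. eps_eps e (tens a b))"
      by (rule kfunctional_comp[OF kfunctional_eps_eps klinear_tens1])
    show "kfunctional (\<lambda>b. e a * e b)" by (rule kfun_mult_right[OF assms])
  qed (rule h)
qed



lemma lin_tmult1: "klinear g \<Longrightarrow> klinear (\<lambda>x. tmult mX mY (g x) y)"
  by (rule klinear_comp'[OF klinear_tmult1])
lemma lin_tmult2: "klinear g \<Longrightarrow> klinear (\<lambda>x. tmult mX mY y (g x))"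
  by (rule klinear_comp'[OF klinear_tmult2])
lemma lin_tmap: "klinear g \<Longrightarrow> klinear (\<lambda>x. tmap f1 f2 (g x))"
  by (rule klinear_comp'[OF klinear_tmap])
lemma lin_tens1: "klinear g \<Longrightarrow> klinear (\<lambda>x. tens (g x) y)"
  by (rule klinear_comp'[OF klinear_tens2])
lemma lin_tens2: "klinear g \<Longrightarrow> klinear (\<lambda>x. tens y (g x))"
  by (rule klinear_comp'[OF klinear_tens1])
lemma lin_assocr: "klinear g \<Longrightarrow> klinear (\<lambda>x. assocr (g x))"
  by (rule klinear_comp'[OF klinear_assocr])
lemma lin_assocl: "klinear g \<Longrightarrow> klinear (\<lambda>x. assocl (g x))"
  by (rule klinear_comp'[OF klinear_assocl])
lemma lin_tw: "klinear g \<Longrightarrow> klinear (\<lambda>x. tw (g x))"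
  by (rule klinear_comp'[OF klinear_tw])
lemma lin_eps_id: "klinear g \<Longrightarrow> klinear (\<lambda>x. eps_id e (g x))"
  by (rule klinear_comp'[OF klinear_eps_id])
lemma lin_id_eps: "klinear g \<Longrightarrow> klinear (\<lambda>x. id_eps e (g x))"
  by (rule klinear_comp'[OF klinear_id_eps])
lemma lin_mu: "klinear g \<Longrightarrow> klinear (\<lambda>x. mu m (g x))"
  by (rule klinear_comp'[OF klinear_mu])
lemma lin_sc: "klinear g \<Longrightarrow> klinear (\<lambda>x. sc c (g x))"
  by (rule klinear_sc_fun)
lemma lin_bil1: "kbilinear m \<Longrightarrow> klinear g \<Longrightarrow> klinear (\<lambda>x. m a (g x))"
  by (rule klinear_comp'[OF kbilinearD1])
lemma lin_bil2: "kbilinear m \<Longrightarrow> klinear g \<Longrightarrow> klinear (\<lambda>x. m (g x) b)"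
  by (rule klinear_comp'[OF kbilinearD2])
lemma lin_scarg: "kfunctional e \<Longrightarrow> kfunctional g \<Longrightarrow> klinear (\<lambda>x. sc (g x) b)"
  by (auto intro!: klinearI simp: kfunctional_add kfunctional_sc sc_add_left sc_sc)
lemma fun_comp: "kfunctional f \<Longrightarrow> klinear g \<Longrightarrow> kfunctional (\<lambda>x. f (g x))"
  by (rule kfunctional_comp)
lemma fun_eps_eps: "klinear g \<Longrightarrow> kfunctional (\<lambda>x. eps_eps e (g x))"
  by (rule kfunctional_comp[OF kfunctional_eps_eps])
lemma fun_mult: "kfunctional f \<Longrightarrow> kfunctional (\<lambda>x. c * f x)"
  by (simp add: kfunctional_def algebra_simps)

lemmas linI = lin_tmult1 lin_tmult2 lin_tmap lin_tens1 lin_tens2 lin_assocr lin_assocl lin_tw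
  lin_eps_id lin_id_eps lin_mu lin_sc klinear_id' klinear_id

lemma bv_pair3l: "bv p = tens (tens (bv (fst (fst p))) (bv (snd (fst p)))) (bv (snd p))"
  by (simp add: tens_bv)
lemma bv_pair3r: "bv p = tens (bv (fst p)) (tens (bv (fst (snd p))) (bv (snd (snd p))))"
  by (simp add: tens_bv)

lemma tens_bilin_ext:
  assumes "\<And>y. klinear (\<lambda>x. F x y)" "\<And>y. klinear (\<lambda>x. G x y)"
    "\<And>x. klinear (F x)" "\<And>x. klinear (G x)"
    "\<And>a b c d. F (tens a b) (tens c d) = G (tens a b) (tens c d)"
  shows "F x y = G x y"
  by (rule bilin_ext[OF assms(1-4)]) (metis bv_pair assms(5))

lemma tens3l_bilin_ext:
  assumes "\<And>y. klinear (\<lambda>x. F x y)" "\<And>y. klinear (\<lambda>x. G x y)"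
    "\<And>x. klinear (F x)" "\<And>x. klinear (G x)"
    "\<And>a b c a' b' c'. F (tens (tens a b) c) (tens (tens a' b') c') = G (tens (tens a b) c) (tens (tens a' b') c')"
  shows "F x y = G x y"
  by (rule bilin_ext[OF assms(1-4)]) (metis bv_pair3l assms(5))

lemma tens3r_bilin_ext:
  assumes "\<And>y. klinear (\<lambda>x. F x y)" "\<And>y. klinear (\<lambda>x. G x y)"
    "\<And>x. klinear (F x)" "\<And>x. klinear (G x)"
    "\<And>a b c a' b' c'. F (tens a (tens b c)) (tens a' (tens b' c')) = G (tens a (tens b c)) (tens a' (tens b' c'))"
  shows "F x y = G x y"
  by (rule bilin_ext[OF assms(1-4)]) (metis bv_pair3r assms(5))

definition kmhom :: "(('a \<Rightarrow>\<^sub>0 'k::field) \<Rightarrow> ('c \<Rightarrow>\<^sub>0 'k)) \<Rightarrow> (('a \<Rightarrow>\<^sub>0 'k) \<Rightarrow> ('a \<Rightarrow>\<^sub>0 'k) \<Rightarrow> ('a \<Rightarrow>\<^sub>0 'k))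
   \<Rightarrow> (('c \<Rightarrow>\<^sub>0 'k) \<Rightarrow> ('c \<Rightarrow>\<^sub>0 'k) \<Rightarrow> ('c \<Rightarrow>\<^sub>0 'k)) \<Rightarrow> bool" where
  "kmhom f mA mB \<longleftrightarrow> klinear f \<and> (\<forall>a b. f (mA a b) = mB (f a) (f b))"

lemma tmap_mult:
  assumes f: "kmhom f mA mA'" and g: "kmhom g mB mB'"
    and b: "kbilinear mA" "kbilinear mB" "kbilinear mA'" "kbilinear mB'"
  shows "tmap f g (tmult mA mB x y) = tmult mA' mB' (tmap f g x) (tmap f g y)"
proof -
  have lf: "klinear f" and lg: "klinear g" and hf: "\<And>a b. f (mA a b) = mA' (f a) (f b)"
    and hg: "\<And>a b. g (mB a b) = mB' (g a) (g b)"
    using f g unfolding kmhom_def by auto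
  show ?thesis
    by (rule tens_bilin_ext[where F="\<lambda>x y. tmap f g (tmult mA mB x y)" and G="\<lambda>x y. tmult mA' mB' (tmap f g x) (tmap f g y)"])
       (intro linI | simp add: tmult_tens b tmap_tens lf lg hf hg)+
qed

lemma assocr_mult:
  assumes "kbilinear mA" "kbilinear mB" "kbilinear mC"
  shows "assocr (tmult (tmult mA mB) mC x y) = tmult mA (tmult mB mC) (assocr x) (assocr y)"
  by (rule tens3l_bilin_ext[where F="\<lambda>x y. assocr (tmult (tmult mA mB) mC x y)" and G="\<lambda>x y. tmult mA (tmult mB mC) (assocr x) (assocr y)"])
     (intro linI | simp add: tmult_tens assms assocr_tens)+

lemma iota_multipliers: "kalgebra M \<Longrightarrow> iota M x \<in> multipliers M"
  unfolding iota_def multipliers_def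
  by (auto simp: kalgebraD(2) dest: kalgebraD intro: kbilinearD1 kbilinearD2)

lemma unital_algebraD:
  assumes "unital_algebra M e"
  shows "kalgebra M" "M e a = a" "M a e = a" "kbilinear M"
  using assms unfolding unital_algebra_def by (auto dest: kalgebraD)

lemma multipliers_iota:
  assumes "unital_algebra M e" "w \<in> multipliers M"
  shows "w = iota M (snd w e)"
proof -
  obtain l r where w: "w = (l, r)" by (cases w)
  have c: "M a (l b) = M (r a) b" for a b using assms(2) w unfolding multipliers_def by auto
  have 1: "l b = M (r e) b" for b using c[of e b] unital_algebraD(2)[OF assms(1)] by simp
  have 2: "r a = M a (l e)" for a using c[of a e] unital_algebraD(3)[OF assms(1)] by simp
  have 3: "l e = r e" using 1[of e] unital_algebraD(3)[OF assms(1)] by simp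
  have "l = M (r e)" by (rule ext, rule 1)
  moreover have "r = (\<lambda>a. M a (r e))" by (rule ext) (metis 2 3)
  ultimately show ?thesis using w unfolding iota_def by simp
qed

lemma iota_inj:
  assumes "unital_algebra M e" "iota M x = iota M y"
  shows "x = y"
proof -
  have "M x e = M y e" using assms(2) unfolding iota_def by (metis prod.inject)
  then show ?thesis using unital_algebraD(3)[OF assms(1)] by simp
qed

lemma mmul_iota: "kalgebra M \<Longrightarrow> mmul (iota M x) (iota M y) = iota M (M x y)"
  unfolding mmul_def iota_def by (auto intro!: ext simp: kalgebraD(2))

lemma munit_iota: "unital_algebra M e \<Longrightarrow> munit = iota M e"
  unfolding munit_def iota_def by (auto intro!: ext simp: unital_algebraD)

lemma madd_iota: "kbilinear M \<Longrightarrow> madd (iota M x) (iota M y) = iota M (x + y)"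
  unfolding madd_def iota_def
  by (auto intro!: ext simp: klinear_add[OF kbilinearD2] klinear_add[OF kbilinearD1])

lemma msc_iota: "kbilinear M \<Longrightarrow> msc c (iota M x) = iota M (sc c x)"
  unfolding msc_def iota_def
  by (auto intro!: ext simp: klinear_sc[OF kbilinearD2] klinear_sc[OF kbilinearD1])

lemma mlext_iota:
  assumes "kbilinear M"
  shows "mlext (\<lambda>p. iota M (g p)) x = iota M (lext g x)"
proof -
  have "(\<Sum>p\<in>Poly_Mapping.keys x. sc (Poly_Mapping.lookup x p) (M (g p) y)) = M (lext g x) y" for y
    unfolding lext_def
    by (simp add: klinear_sum[OF kbilinearD2[OF assms]] klinear_sc[OF kbilinearD2[OF assms]])
  moreover have "(\<Sum>p\<in>Poly_Mapping.keys x. sc (Poly_Mapping.lookup x p) (M y (g p))) = M y (lext g x)" for y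
    unfolding lext_def
    by (simp add: klinear_sum[OF kbilinearD1[OF assms]] klinear_sc[OF kbilinearD1[OF assms]])
  ultimately show ?thesis unfolding mlext_def iota_def by (auto intro!: ext)
qed

lemma kspan_base: "s \<in> S \<Longrightarrow> s \<in> kspan S"
  unfolding kspan_def by (rule CollectI, rule exI[of _ "{s}"], rule exI[of _ "\<lambda>_. 1"]) auto

lemma kspan_zero: "0 \<in> kspan S"
  unfolding kspan_def by (rule CollectI, rule exI[of _ "{}"]) auto

lemma kspan_sc:
  fixes S :: "('a \<Rightarrow>\<^sub>0 'k::field) set"
  shows "x \<in> kspan S \<Longrightarrow> sc c x \<in> kspan S"
  unfolding kspan_def
proof (safe)
  fix F :: "('a \<Rightarrow>\<^sub>0 'k) set" and d assume "finite F" "F \<subseteq> S"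
  then show "\<exists>F' c'. finite F' \<and> F' \<subseteq> S \<and> sc c (\<Sum>s\<in>F. sc (d s) s) = (\<Sum>s\<in>F'. sc (c' s) s)"
    by (intro exI[of _ F] exI[of _ "\<lambda>s. c * d s"]) (simp add: sc_sum sc_sc)
qed

lemma kspan_add:
  fixes S :: "('a \<Rightarrow>\<^sub>0 'k::field) set"
  shows "x \<in> kspan S \<Longrightarrow> y \<in> kspan S \<Longrightarrow> x + y \<in> kspan S"
  unfolding kspan_def
proof (safe)
  fix F F' :: "('a \<Rightarrow>\<^sub>0 'k) set" and d d' :: "('a \<Rightarrow>\<^sub>0 'k) \<Rightarrow> 'k" assume f: "finite F" "F \<subseteq> S" "finite F'" "F' \<subseteq> S"
  let ?G = "F \<union> F'"
  let ?c = "\<lambda>s. (if s \<in> F then d s else 0) + (if s \<in> F' then d' s else 0)"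
  have 1: "(\<Sum>s\<in>F. sc (d s) s) = (\<Sum>s\<in>?G. sc (if s \<in> F then d s else 0) s)"
    using f by (intro sum.mono_neutral_cong_left) auto
  have 2: "(\<Sum>s\<in>F'. sc (d' s) s) = (\<Sum>s\<in>?G. sc (if s \<in> F' then d' s else 0) s)"
    using f by (intro sum.mono_neutral_cong_left) auto
  show "\<exists>G c. finite G \<and> G \<subseteq> S \<and> (\<Sum>s\<in>F. sc (d s) s) + (\<Sum>s\<in>F'. sc (d' s) s) = (\<Sum>s\<in>G. sc (c s) s)"
    using f by (intro exI[of _ ?G] exI[of _ ?c]) (simp add: 1 2 sum.distrib[symmetric] sc_add_left)
qed

lemma kspan_sum: "finite F \<Longrightarrow> (\<And>s. s \<in> F \<Longrightarrow> f s \<in> kspan S) \<Longrightarrow> sum f F \<in> kspan S"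
  by (induct F rule: finite_induct) (auto intro: kspan_add kspan_zero)

lemma kspan_mono: "S \<subseteq> kspan T \<Longrightarrow> kspan S \<subseteq> kspan T"
  unfolding kspan_def[of S] by (auto intro!: kspan_sum kspan_sc)

lemma kspan_eqI: "S \<subseteq> kspan T \<Longrightarrow> T \<subseteq> kspan S \<Longrightarrow> kspan S = kspan T"
  using kspan_mono by blast

lemma kspan_lin:
  assumes "klinear f" "x \<in> kspan S" "\<And>s. s \<in> S \<Longrightarrow> f s = s"
  shows "f x = x"
proof -
  obtain F c where "finite F" "F \<subseteq> S" "x = (\<Sum>s\<in>F. sc (c s) s)"
    using assms(2) unfolding kspan_def by auto
  then show ?thesis using assms(3) by (auto simp: klinear_sum[OF assms(1)] klinear_sc[OF assms(1)] intro!: sum.cong)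
qed



locale UA =
  fixes m :: "('b \<Rightarrow>\<^sub>0 'k::field) \<Rightarrow> ('b \<Rightarrow>\<^sub>0 'k) \<Rightarrow> ('b \<Rightarrow>\<^sub>0 'k)" and u :: "'b \<Rightarrow>\<^sub>0 'k"
  assumes UA: "unital_algebra m u"
begin

abbreviation "M2 \<equiv> tmult m m"
abbreviation "M3 \<equiv> tmult m M2"
abbreviation "M2l \<equiv> tmult M2 m"
abbreviation "e2 \<equiv> tens u u"
abbreviation "e3 \<equiv> tens u e2"

lemma am: "kalgebra m" and bm: "kbilinear m" and mu1[simp]: "m u a = a" and mu2[simp]: "m a u = a"
  using unital_algebraD[OF UA] by auto

lemma lm1[simp]: "klinear (m a)" and lm2[simp]: "klinear (\<lambda>x. m x b)"
  using bm by (auto intro: kbilinearD1 kbilinearD2)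

lemma uM2: "unital_algebra M2 e2" by (rule unital_tmult[OF UA UA])
lemma uM3: "unital_algebra M3 e3" by (rule unital_tmult[OF UA uM2])
lemma uM2l: "unital_algebra M2l (tens e2 u)" by (rule unital_tmult[OF uM2 UA])
lemma aM2: "kalgebra M2" and aM3: "kalgebra M3" and aM2l: "kalgebra M2l"
  using uM2 uM3 uM2l unital_algebraD by blast+
lemma bM2: "kbilinear M2" and bM3: "kbilinear M3" and bM2l: "kbilinear M2l"
  by simp_all

lemma M2_tens[simp]: "M2 (tens a b) (tens c d) = tens (m a c) (m b d)"
  by (rule tmult_tens[OF bm bm])
lemma M3_tens[simp]: "M3 (tens a Y) (tens c Z) = tens (m a c) (M2 Y Z)"
  by (rule tmult_tens[OF bm bM2])
lemma M2l_tens[simp]: "M2l (tens Y a) (tens Z c) = tens (M2 Y Z) (m a c)"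
  by (rule tmult_tens[OF bM2 bm])

lemma M2_assoc: "M2 (M2 x y) z = M2 x (M2 y z)" by (rule kalgebraD(2)[OF aM2])
lemma M3_assoc: "M3 (M3 x y) z = M3 x (M3 y z)" by (rule kalgebraD(2)[OF aM3])
lemma m_assoc: "m (m x y) z = m x (m y z)" by (rule kalgebraD(2)[OF am])

lemma M2_e2[simp]: "M2 e2 x = x" "M2 x e2 = x" using unital_algebraD[OF uM2] by auto
lemma M3_e3[simp]: "M3 e3 x = x" "M3 x e3 = x" using unital_algebraD[OF uM3] by auto

lemma assocr_M2l: "assocr (M2l x y) = M3 (assocr x) (assocr y)"
  by (rule assocr_mult[OF bm bm bm])

lemma t2: "M3 (tens a Y) = tmap (m a) (M2 Y)"
  by (rule ext, rule tens_ext) (intro linI | simp add: tmap_tens)+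

lemma t3: "(\<lambda>z. M3 z (tens a Y)) = tmap (\<lambda>y. m y a) (\<lambda>z. M2 z Y)"
  by (rule ext, rule tens_ext[where f="\<lambda>z. M3 z (tens a Y)"]) (intro linI | simp add: tmap_tens)+

lemma t4_aux: "M3 (assocr (tens Y a)) (tens x (tens y z)) = assocr (tens (M2 Y (tens x y)) (m a z))"
  by (rule tens_ext[where f="\<lambda>Y. M3 (assocr (tens Y a)) (tens x (tens y z))"])
     (intro linI | simp add: assocr_tens)+

lemma t4: "M3 (assocr (tens Y a)) = assocr \<circ> tmap (M2 Y) (m a) \<circ> assocl"
  by (rule ext, rule tens3_ext[where f="M3 (assocr (tens Y a))"])
     (intro linI klinear_comp | simp add: t4_aux assocl_tens tmap_tens)+

lemma t5_aux: "M3 (tens x (tens y z)) (assocr (tens Y a)) = assocr (tens (M2 (tens x y) Y) (m z a))"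
  by (rule tens_ext[where f="\<lambda>Y. M3 (tens x (tens y z)) (assocr (tens Y a))"])
     (intro linI | simp add: assocr_tens)+

lemma t5: "(\<lambda>w. M3 w (assocr (tens Y a))) = assocr \<circ> tmap (\<lambda>z. M2 z Y) (\<lambda>y. m y a) \<circ> assocl"
  by (rule ext, rule tens3_ext[where f="\<lambda>w. M3 w (assocr (tens Y a))"])
     (intro linI klinear_comp | simp add: t5_aux assocl_tens tmap_tens)+

lemma m_u_fun[simp]: "m u = id" "(\<lambda>y. m y u) = id" by auto

lemma one_tens_iota: "one_tens m b = iota M2 (tens u b)"
proof -
  have "M2 (tens u b) = tmap id (m b)"
    by (rule ext, rule tens_ext) (intro linI | simp add: tmap_tens)+
  moreover have "(\<lambda>y. M2 y (tens u b)) = tmap id (\<lambda>y. m y b)"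
    by (rule ext, rule tens_ext[where f="\<lambda>y. M2 y (tens u b)"]) (intro linI | simp add: tmap_tens)+
  ultimately show ?thesis unfolding one_tens_def iota_def by simp
qed

lemma tens_one_iota: "tens_one m a = iota M2 (tens a u)"
proof -
  have "M2 (tens a u) = tmap (m a) id"
    by (rule ext, rule tens_ext) (intro linI | simp add: tmap_tens)+
  moreover have "(\<lambda>y. M2 y (tens a u)) = tmap (\<lambda>y. m y a) id"
    by (rule ext, rule tens_ext[where f="\<lambda>y. M2 y (tens a u)"]) (intro linI | simp add: tmap_tens)+
  ultimately show ?thesis unfolding tens_one_def iota_def by simp
qed

lemma one_tens_E_iota: "one_tens_E (iota M2 e) = iota M3 (tens u e)"
  unfolding one_tens_E_def iota_def using t2[of u e] t3[of u e] by (simp add: id_def)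

lemma E_tens_one_iota: "E_tens_one (iota M2 e) = iota M3 (assocr (tens e u))"
  unfolding E_tens_one_def iota_def using t4[of e u] t5[of e u] by (simp add: id_def)

end



context UA
begin

lemma lin_m1: "klinear g \<Longrightarrow> klinear (\<lambda>x. m a (g x))"
  by (rule klinear_comp'[OF lm1])
lemma lin_m2: "klinear g \<Longrightarrow> klinear (\<lambda>x. m (g x) b)"
  by (rule klinear_comp'[OF lm2])

lemmas linU = linI lin_m1 lin_m2

lemma m_sc1[simp]: "m (sc c x) y = sc c (m x y)" using klinear_sc[OF lm2] by blast
lemma m_sc2[simp]: "m x (sc c y) = sc c (m x y)" using klinear_sc[OF lm1] by blast

context
  fixes \<epsilon> :: "('b \<Rightarrow>\<^sub>0 'k) \<Rightarrow> 'k"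
  assumes fe: "kfunctional \<epsilon>"
begin

lemma fe_sc[simp]: "\<epsilon> (sc c x) = c * \<epsilon> x" using kfunctional_sc[OF fe] .
lemma eid_tens[simp]: "eps_id \<epsilon> (tens a b) = sc (\<epsilon> a) b" by (rule eps_id_tens[OF fe])
lemma ide_tens[simp]: "id_eps \<epsilon> (tens a b) = sc (\<epsilon> b) a" by (rule id_eps_tens[OF fe])
lemma ee_tens[simp]: "eps_eps \<epsilon> (tens a b) = \<epsilon> a * \<epsilon> b" by (rule eps_eps_tens[OF fe])

lemma e1: "eps_id \<epsilon> (M2 X (tens u c)) = m (eps_id \<epsilon> X) c"
  by (rule tens_ext[where f="\<lambda>X. eps_id \<epsilon> (M2 X (tens u c))" and g="\<lambda>X. m (eps_id \<epsilon> X) c"])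
     (intro linU | simp)+

lemma e2: "eps_id \<epsilon> (M2 (tens u a) X) = m a (eps_id \<epsilon> X)"
  by (rule tens_ext[where f="\<lambda>X. eps_id \<epsilon> (M2 (tens u a) X)" and g="\<lambda>X. m a (eps_id \<epsilon> X)"])
     (intro linU | simp)+

lemma e3: "id_eps \<epsilon> (M2 (tens a u) X) = m a (id_eps \<epsilon> X)"
  by (rule tens_ext[where f="\<lambda>X. id_eps \<epsilon> (M2 (tens a u) X)" and g="\<lambda>X. m a (id_eps \<epsilon> X)"])
     (intro linU | simp)+

lemma e4: "id_eps \<epsilon> (M2 X (tens c u)) = m (id_eps \<epsilon> X) c"
  by (rule tens_ext[where f="\<lambda>X. id_eps \<epsilon> (M2 X (tens c u))" and g="\<lambda>X. m (id_eps \<epsilon> X) c"])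
     (intro linU | simp)+

lemma e5a: "eps_eps \<epsilon> X = \<epsilon> (eps_id \<epsilon> X)"
  by (rule tensk_ext[where f="eps_eps \<epsilon>" and g="\<lambda>X. \<epsilon> (eps_id \<epsilon> X)"])
     (simp_all add: fun_comp[OF fe klinear_eps_id])

lemma e5b: "eps_eps \<epsilon> X = \<epsilon> (id_eps \<epsilon> X)"
  by (rule tensk_ext[where f="eps_eps \<epsilon>" and g="\<lambda>X. \<epsilon> (id_eps \<epsilon> X)"])
     (simp_all add: fun_comp[OF fe klinear_id_eps] mult.commute)

lemma e6: "klinear f \<Longrightarrow> f (eps_id \<epsilon> X) = eps_id \<epsilon> (tmap id f X)"
  by (rule tens_ext[where f="\<lambda>X. f (eps_id \<epsilon> X)" and g="\<lambda>X. eps_id \<epsilon> (tmap id f X)"])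
     (rule klinear_comp'[OF _ klinear_eps_id], assumption, intro linU, simp add: tmap_tens klinear_sc)

lemma w1: "eps_eps \<epsilon> (M2 (M2 (tens x u) (tw Y)) (tens u b)) = \<epsilon> (m x (eps_id \<epsilon> (M2 Y (tens b u))))"
  by (rule tensk_ext[where f="\<lambda>Y. eps_eps \<epsilon> (M2 (M2 (tens x u) (tw Y)) (tens u b))"
                      and g="\<lambda>Y. \<epsilon> (m x (eps_id \<epsilon> (M2 Y (tens b u))))"])
     (intro fun_eps_eps fun_comp[OF fe] linU | simp add: tw_tens mult.commute)+

lemma w2: "eps_eps \<epsilon> (M2 (M2 (tens a u) Y) (tens u z)) = \<epsilon> (m (eps_id \<epsilon> (M2 (tens a u) Y)) z)"
  by (rule tensk_ext[where f="\<lambda>Y. eps_eps \<epsilon> (M2 (M2 (tens a u) Y) (tens u z))"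
                      and g="\<lambda>Y. \<epsilon> (m (eps_id \<epsilon> (M2 (tens a u) Y)) z)"])
     (intro fun_eps_eps fun_comp[OF fe] linU | simp)+

end

lemma e7a: "klinear f \<Longrightarrow> tmap id f (M2 X (tens b u)) = M2 (tmap id f X) (tens b u)"
  by (rule tens_ext[where f="\<lambda>X. tmap id f (M2 X (tens b u))" and g="\<lambda>X. M2 (tmap id f X) (tens b u)"])
     (intro linU | simp add: tmap_tens)+

lemma e7b: "klinear f \<Longrightarrow> tmap id f (M2 (tens a u) X) = M2 (tens a u) (tmap id f X)"
  by (rule tens_ext[where f="\<lambda>X. tmap id f (M2 (tens a u) X)" and g="\<lambda>X. M2 (tens a u) (tmap id f X)"])
     (intro linU | simp add: tmap_tens)+

lemma e8a: "tmap id (m a) X = M2 (tens u a) X"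
  by (rule tens_ext[where f="tmap id (m a)" and g="M2 (tens u a)"]) (intro linU | simp add: tmap_tens)+

lemma e8b: "tmap id (\<lambda>y. m y c) X = M2 X (tens u c)"
  by (rule tens_ext[where f="tmap id (\<lambda>y. m y c)" and g="\<lambda>X. M2 X (tens u c)"]) (intro linU | simp add: tmap_tens)+

lemma d1: "M3 (tens u Y) (assocr (tens X u)) = tmap id (\<lambda>z. M2 Y (tens z u)) X"
  by (rule tens_ext[where f="\<lambda>X. M3 (tens u Y) (assocr (tens X u))" and g="tmap id (\<lambda>z. M2 Y (tens z u))"])
     (intro linU | simp add: tmap_tens[OF klinear_id lin_tmult2[OF lin_tens1[OF klinear_id']]] assocr_tens)+

lemma d2: "M3 (assocr (tens X u)) (tens u Y) = tmap id (\<lambda>z. M2 (tens z u) Y) X"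
  by (rule tens_ext[where f="\<lambda>X. M3 (assocr (tens X u)) (tens u Y)" and g="tmap id (\<lambda>z. M2 (tens z u) Y)"])
     (intro linU | simp add: tmap_tens[OF klinear_id lin_tmult1[OF lin_tens1[OF klinear_id']]] assocr_tens)+

end



locale WD = UA m u for m :: "('b \<Rightarrow>\<^sub>0 'k::field) \<Rightarrow> ('b \<Rightarrow>\<^sub>0 'k) \<Rightarrow> ('b \<Rightarrow>\<^sub>0 'k)" and u +
  fixes \<Delta> :: "('b \<Rightarrow>\<^sub>0 'k::field) \<Rightarrow> ('b \<times> 'b \<Rightarrow>\<^sub>0 'k)"
  assumes lD: "klinear \<Delta>" and hD: "\<And>a b. \<Delta> (m a b) = M2 (\<Delta> a) (\<Delta> b)"
begin

abbreviation "D \<equiv> iota M2 \<circ> \<Delta>"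
abbreviation "D1 \<equiv> \<Delta> u"

lemma lin_D: "klinear g \<Longrightarrow> klinear (\<lambda>x. \<Delta> (g x))"
  by (rule klinear_comp'[OF lD])

lemmas linD = linU lin_D

lemma D1_left[simp]: "M2 D1 (\<Delta> a) = \<Delta> a" using hD[of u a] by simp
lemma D1_right[simp]: "M2 (\<Delta> a) D1 = \<Delta> a" using hD[of a u] by simp

lemma kmhom_id: "kmhom id m m" unfolding kmhom_def by simp
lemma kmhom_D: "kmhom \<Delta> m M2" unfolding kmhom_def using lD hD by simp

lemma tidD_mult: "tmap id \<Delta> (M2 x y) = M3 (tmap id \<Delta> x) (tmap id \<Delta> y)"
  by (rule tmap_mult[OF kmhom_id kmhom_D bm bm bm bM2])

lemma tDid_mult: "tmap \<Delta> id (M2 x y) = M2l (tmap \<Delta> id x) (tmap \<Delta> id y)"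
  by (rule tmap_mult[OF kmhom_D kmhom_id bm bm bM2 bm])

lemma tidD_tens[simp]: "tmap id \<Delta> (tens a b) = tens a (\<Delta> b)"
  by (simp add: tmap_tens lD)
lemma tDid_tens[simp]: "tmap \<Delta> id (tens a b) = tens (\<Delta> a) b"
  by (simp add: tmap_tens lD)

lemma iota_the: "(THE t. iota M2 t = iota M2 x) = x"
  by (rule the_equality) (auto dest: iota_inj[OF uM2])

lemma T1_bv: "T1 m D = lext (\<lambda>p. M2 (\<Delta> (bv (fst p))) (tens u (bv (snd p))))"
  unfolding T1_def
  by (rule arg_cong[where f=lext], rule ext)
     (simp add: one_tens_iota mmul_iota[OF aM2] iota_the)

lemma T1_tens: "T1 m D (tens a b) = M2 (\<Delta> a) (tens u b)"
  unfolding T1_bv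
  by (rule bilin_ext[where F="\<lambda>a b. lext (\<lambda>p. M2 (\<Delta> (bv (fst p))) (tens u (bv (snd p)))) (tens a b)"
        and G="\<lambda>a b. M2 (\<Delta> a) (tens u b)"])
     (intro linD klinear_comp'[OF klinear_lext klinear_tens2] klinear_comp'[OF klinear_lext klinear_tens1]
      | simp add: tens_bv)+

lemma T2_bv: "T2 m D = lext (\<lambda>p. M2 (tens (bv (fst p)) u) (\<Delta> (bv (snd p))))"
  unfolding T2_def
  by (rule arg_cong[where f=lext], rule ext)
     (simp add: tens_one_iota mmul_iota[OF aM2] iota_the)

lemma T2_tens: "T2 m D (tens a b) = M2 (tens a u) (\<Delta> b)"
  unfolding T2_bv
  by (rule bilin_ext[where F="\<lambda>a b. lext (\<lambda>p. M2 (tens (bv (fst p)) u) (\<Delta> (bv (snd p)))) (tens a b)"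
        and G="\<lambda>a b. M2 (tens a u) (\<Delta> b)"])
     (intro linD klinear_comp'[OF klinear_lext klinear_tens2] klinear_comp'[OF klinear_lext klinear_tens1]
      | simp add: tens_bv)+

lemma klinear_T1[simp]: "klinear (T1 m D)" unfolding T1_def by simp
lemma klinear_T2[simp]: "klinear (T2 m D)" unfolding T2_def by simp

lemma id_Delta_eq: "id_Delta m D x = iota M3 (tmap id \<Delta> x)"
proof -
  have "id_Delta m D x = mlext (\<lambda>p. iota M3 (tens (bv (fst p)) (\<Delta> (bv (snd p))))) x"
    unfolding id_Delta_def iota_def using t2 t3 by simp
  also have "\<dots> = iota M3 (lext (\<lambda>p. tens (bv (fst p)) (\<Delta> (bv (snd p)))) x)"
    by (rule mlext_iota[OF bM3])
  also have "lext (\<lambda>p. tens (bv (fst p)) (\<Delta> (bv (snd p)))) = tmap id \<Delta>"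
    unfolding tmap_def by simp
  finally show ?thesis .
qed

lemma Delta_id_eq: "Delta_id m D x = iota M3 (assocr (tmap \<Delta> id x))"
proof -
  have "Delta_id m D x = mlext (\<lambda>p. iota M3 (assocr (tens (\<Delta> (bv (fst p))) (bv (snd p))))) x"
    unfolding Delta_id_def iota_def using t4 t5 by simp
  also have "\<dots> = iota M3 (lext (\<lambda>p. assocr (tens (\<Delta> (bv (fst p))) (bv (snd p)))) x)"
    by (rule mlext_iota[OF bM3])
  also have "lext (\<lambda>p. assocr (tens (\<Delta> (bv (fst p))) (bv (snd p)))) x = assocr (tmap \<Delta> id x)"
    by (rule lin_ext[where f="lext (\<lambda>p. assocr (tens (\<Delta> (bv (fst p))) (bv (snd p))))"
                      and g="\<lambda>x. assocr (tmap \<Delta> id x)"])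
       (intro linD klinear_lext | simp add: tmap_def)+
  finally show ?thesis .
qed

definition "iiL x = (assocr \<circ> tmap (T2 m D) id \<circ> assocl) (tmap id (T1 m D) x)"
definition "iiR x = tmap id (T1 m D) ((assocr \<circ> tmap (T2 m D) id \<circ> assocl) x)"

lemma Y1: "assocr (tmap (T2 m D) id (assocl (tens a W))) = M3 (tens a e2) (assocr (tmap \<Delta> id W))"
proof (rule tens_ext[where f="\<lambda>W. assocr (tmap (T2 m D) id (assocl (tens a W)))"
                       and g="\<lambda>W. M3 (tens a e2) (assocr (tmap \<Delta> id W))"])
  fix s t
  have "assocr (tens (M2 (tens a u) (\<Delta> s)) t) = assocr (M2l (tens (tens a u) u) (tens (\<Delta> s) t))" by simp
  also have "\<dots> = M3 (tens a e2) (assocr (tens (\<Delta> s) t))" by (simp only: assocr_M2l assocr_tens)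
  finally show "assocr (tmap (T2 m D) id (assocl (tens a (tens s t)))) =
             M3 (tens a e2) (assocr (tmap \<Delta> id (tens s t)))"
    by (simp add: assocl_tens tmap_tens T2_tens)
qed (intro linD | simp)+

lemma Y2: "tmap id (T1 m D) (assocr (tens Z c)) = M3 (tmap id \<Delta> Z) (tens u (tens u c))"
  by (rule tens_ext[where f="\<lambda>Z. tmap id (T1 m D) (assocr (tens Z c))"
                       and g="\<lambda>Z. M3 (tmap id \<Delta> Z) (tens u (tens u c))"])
     (intro linD | simp add: assocr_tens tmap_tens T1_tens)+

lemma iiL_tens: "iiL (tens a (tens b c)) = M3 (tens a e2) (M3 (assocr (tmap \<Delta> id (\<Delta> b))) (tens u (tens u c)))"
proof -
  have 1: "tens (\<Delta> u) c = M2l (tmap \<Delta> id e2) (tens e2 c)" by simp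
  have "tmap \<Delta> id (M2 (\<Delta> b) (tens u c)) = M2l (tmap \<Delta> id (\<Delta> b)) (tens (\<Delta> u) c)"
    by (simp add: tDid_mult)
  also have "\<dots> = M2l (tmap \<Delta> id (M2 (\<Delta> b) e2)) (tens e2 c)"
    unfolding 1 tDid_mult by (simp add: kalgebraD(2)[OF aM2l])
  finally have 2: "tmap \<Delta> id (M2 (\<Delta> b) (tens u c)) = M2l (tmap \<Delta> id (\<Delta> b)) (tens e2 c)" by simp
  show ?thesis
    unfolding iiL_def by (simp add: tmap_tens T1_tens Y1 2 assocr_M2l assocr_tens)
qed

lemma iiR_tens: "iiR (tens a (tens b c)) = M3 (tens a e2) (M3 (tmap id \<Delta> (\<Delta> b)) (tens u (tens u c)))"
proof -
  have 1: "tens a (\<Delta> u) = M3 (tens a e2) (tmap id \<Delta> e2)" by simp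
  have "tmap id \<Delta> (M2 (tens a u) (\<Delta> b)) = M3 (tens a (\<Delta> u)) (tmap id \<Delta> (\<Delta> b))"
    by (simp add: tidD_mult)
  also have "\<dots> = M3 (tens a e2) (tmap id \<Delta> (M2 e2 (\<Delta> b)))"
    unfolding 1 tidD_mult by (simp add: M3_assoc[symmetric])
  finally have 2: "tmap id \<Delta> (M2 (tens a u) (\<Delta> b)) = M3 (tens a e2) (tmap id \<Delta> (\<Delta> b))" by simp
  show ?thesis
    unfolding iiR_def by (simp add: assocl_tens tmap_tens T2_tens Y2 2 M3_assoc)
qed

lemma klinear_iiL: "klinear iiL" unfolding iiL_def[abs_def] comp_def by (intro linD klinear_T1 klinear_T2)
lemma klinear_iiR: "klinear iiR" unfolding iiR_def[abs_def] comp_def by (intro linD klinear_T1 klinear_T2)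

definition "coassoc \<longleftrightarrow> (\<forall>a. assocr (tmap \<Delta> id (\<Delta> a)) = tmap id \<Delta> (\<Delta> a))"

lemma ii_iff: "(\<forall>x. iiL x = iiR x) \<longleftrightarrow> coassoc"
proof
  assume h: "\<forall>x. iiL x = iiR x"
  show coassoc unfolding coassoc_def
  proof
    fix b
    show "assocr (tmap \<Delta> id (\<Delta> b)) = tmap id \<Delta> (\<Delta> b)"
      using h[rule_format, of "tens u (tens b u)"] by (simp add: iiL_tens iiR_tens)
  qed
next
  assume c: coassoc
  show "\<forall>x. iiL x = iiR x"
  proof
    fix x
    show "iiL x = iiR x"
      by (rule tens3_ext[OF klinear_iiL klinear_iiR])
         (use c in \<open>simp add: iiL_tens iiR_tens coassoc_def\<close>)
  qed
qed

end



context WD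
begin

lemma tmap_id_comp: "klinear f \<Longrightarrow> klinear g \<Longrightarrow> tmap id f (tmap id g x) = tmap id (\<lambda>y. f (g y)) x"
  by (rule tens_ext[where f="\<lambda>x. tmap id f (tmap id g x)" and g="tmap id (\<lambda>y. f (g y))"])
     (simp_all add: klinear_comp'[OF klinear_tmap klinear_tmap] tmap_tens klinear_comp')

lemma M2_split_r: "M2 X (tens b c) = M2 (M2 X (tens b u)) (tens u c)"
  by (simp add: M2_assoc)
lemma M2_split_l: "M2 (tens a b) X = M2 (tens u b) (M2 (tens a u) X)"
  by (simp add: M2_assoc[symmetric])

context
  fixes \<epsilon> :: "('b \<Rightarrow>\<^sub>0 'k) \<Rightarrow> 'k"
  assumes fe: "kfunctional \<epsilon>"
    and cu1: "\<And>a. eps_id \<epsilon> (\<Delta> a) = a"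
begin

lemma lin_H: "klinear (\<lambda>y. eps_id \<epsilon> (M2 X (tens y u)))" by (intro linD)
lemma lin_H': "klinear (\<lambda>y. eps_id \<epsilon> (M2 (tens y u) X))" by (intro linD)

lemma claimC:
  assumes ca: coassoc and Dr: "assocr (tmap \<Delta> id D1) = M3 (tens u D1) (assocr (tens D1 u))"
  shows "tmap id (\<lambda>y. eps_id \<epsilon> (M2 (\<Delta> a) (tens y u))) D1 = tmap id (m a) D1"
proof -
  let ?K = "\<lambda>Y. eps_id \<epsilon> (M2 (\<Delta> a) Y)"
  have lK: "klinear ?K" by (intro linD)
  have 1: "(\<lambda>y. eps_id \<epsilon> (M2 (\<Delta> a) (tens y u))) = (\<lambda>z. ?K (M2 D1 (tens z u)))"
    by (simp add: M2_assoc[symmetric])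
  have "tmap id (\<lambda>z. ?K (M2 D1 (tens z u))) D1 = tmap id ?K (tmap id (\<lambda>z. M2 D1 (tens z u)) D1)"
    by (rule tmap_id_comp[symmetric, OF lK]) (intro linD)
  also have "tmap id (\<lambda>z. M2 D1 (tens z u)) D1 = tmap id \<Delta> D1"
    using d1[of D1 D1] Dr ca unfolding coassoc_def by simp
  also have "tmap id ?K (tmap id \<Delta> D1) = tmap id (\<lambda>y. ?K (\<Delta> y)) D1"
    by (rule tmap_id_comp[OF lK lD])
  also have "(\<lambda>y. ?K (\<Delta> y)) = m a"
    by (rule ext) (simp add: hD[symmetric] cu1)
  finally show ?thesis unfolding 1 .
qed

lemma claimC':
  assumes ca: coassoc and Dl: "assocr (tmap \<Delta> id D1) = M3 (assocr (tens D1 u)) (tens u D1)"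
  shows "tmap id (\<lambda>y. eps_id \<epsilon> (M2 (tens y u) (\<Delta> c))) D1 = tmap id (\<lambda>y. m y c) D1"
proof -
  let ?K = "\<lambda>Y. eps_id \<epsilon> (M2 Y (\<Delta> c))"
  have lK: "klinear ?K" by (intro linD)
  have 1: "(\<lambda>y. eps_id \<epsilon> (M2 (tens y u) (\<Delta> c))) = (\<lambda>z. ?K (M2 (tens z u) D1))"
    by (simp add: M2_assoc)
  have "tmap id (\<lambda>z. ?K (M2 (tens z u) D1)) D1 = tmap id ?K (tmap id (\<lambda>z. M2 (tens z u) D1) D1)"
    by (rule tmap_id_comp[symmetric, OF lK]) (intro linD)
  also have "tmap id (\<lambda>z. M2 (tens z u) D1) D1 = tmap id \<Delta> D1"
    using d2[of D1 D1] Dl ca unfolding coassoc_def by simp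
  also have "tmap id ?K (tmap id \<Delta> D1) = tmap id (\<lambda>y. ?K (\<Delta> y)) D1"
    by (rule tmap_id_comp[OF lK lD])
  also have "(\<lambda>y. ?K (\<Delta> y)) = (\<lambda>y. m y c)"
    by (rule ext) (simp add: hD[symmetric] cu1)
  finally show ?thesis unfolding 1 .
qed

lemma repl_r:
  assumes "\<And>x. \<epsilon> (m x b) = \<epsilon> (m x b')"
  shows "eps_id \<epsilon> (M2 X (tens b u)) = eps_id \<epsilon> (M2 X (tens b' u))"
  by (rule tens_ext[where f="\<lambda>X. eps_id \<epsilon> (M2 X (tens b u))" and g="\<lambda>X. eps_id \<epsilon> (M2 X (tens b' u))"])
     (intro linD | simp add: eps_id_tens[OF fe] assms)+

lemma repl_l:
  assumes "\<And>z. \<epsilon> (m a z) = \<epsilon> (m a' z)"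
  shows "eps_id \<epsilon> (M2 (tens a u) X) = eps_id \<epsilon> (M2 (tens a' u) X)"
  by (rule tens_ext[where f="\<lambda>X. eps_id \<epsilon> (M2 (tens a u) X)" and g="\<lambda>X. eps_id \<epsilon> (M2 (tens a' u) X)"])
     (intro linD | simp add: eps_id_tens[OF fe] assms)+

lemma lemmaA:
  assumes ca: coassoc and Dr: "assocr (tmap \<Delta> id D1) = M3 (tens u D1) (assocr (tens D1 u))"
    and F4: "\<And>x. \<epsilon> (m x b) = \<epsilon> (m x (eps_id \<epsilon> (M2 D1 (tens b u))))"
  shows "eps_id \<epsilon> (M2 (\<Delta> a) (tens b u)) = m a (eps_id \<epsilon> (M2 D1 (tens b u)))"
proof -
  let ?P = "eps_id \<epsilon> (M2 D1 (tens b u))"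
  let ?H = "\<lambda>y. eps_id \<epsilon> (M2 (\<Delta> a) (tens y u))"
  have "?H b = ?H ?P" by (rule repl_r[OF F4])
  also have "\<dots> = eps_id \<epsilon> (tmap id ?H (M2 D1 (tens b u)))"
    by (rule e6[OF fe lin_H])
  also have "\<dots> = eps_id \<epsilon> (M2 (tmap id ?H D1) (tens b u))"
    by (simp add: e7a[OF lin_H])
  also have "\<dots> = eps_id \<epsilon> (M2 (M2 (tens u a) D1) (tens b u))"
    by (simp add: claimC[OF ca Dr] e8a)
  also have "\<dots> = m a ?P"
    by (simp add: M2_assoc e2[OF fe])
  finally show ?thesis .
qed

lemma lemmaB:
  assumes ca: coassoc and Dl: "assocr (tmap \<Delta> id D1) = M3 (assocr (tens D1 u)) (tens u D1)"
    and E1: "\<And>z. \<epsilon> (m a z) = \<epsilon> (m (eps_id \<epsilon> (M2 (tens a u) D1)) z)"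
  shows "eps_id \<epsilon> (M2 (tens a u) (\<Delta> c)) = m (eps_id \<epsilon> (M2 (tens a u) D1)) c"
proof -
  let ?P = "eps_id \<epsilon> (M2 (tens a u) D1)"
  let ?H = "\<lambda>y. eps_id \<epsilon> (M2 (tens y u) (\<Delta> c))"
  have "?H a = ?H ?P" by (rule repl_l[OF E1])
  also have "\<dots> = eps_id \<epsilon> (tmap id ?H (M2 (tens a u) D1))"
    by (rule e6[OF fe lin_H'])
  also have "\<dots> = eps_id \<epsilon> (M2 (tens a u) (tmap id ?H D1))"
    by (simp add: e7b[OF lin_H'])
  also have "\<dots> = eps_id \<epsilon> (M2 (tens a u) (M2 D1 (tens u c)))"
    by (simp add: claimC'[OF ca Dl] e8b)
  also have "\<dots> = m ?P c"
    by (simp add: M2_assoc[symmetric] e1[OF fe])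
  finally show ?thesis .
qed

lemma vi1_WB:
  assumes ca: coassoc and Dr: "assocr (tmap \<Delta> id D1) = M3 (tens u D1) (assocr (tens D1 u))"
    and F4: "\<And>x b. \<epsilon> (m x b) = \<epsilon> (m x (eps_id \<epsilon> (M2 D1 (tens b u))))"
  shows "eps_id \<epsilon> (tmap id (m a) (M2 D1 (tens b c))) = eps_id \<epsilon> (M2 (\<Delta> a) (tens b c))"
proof -
  have s1: "M2 D1 (tens b c) = M2 (M2 D1 (tens b u)) (tens u c)" by (rule M2_split_r)
  have s2: "M2 (\<Delta> a) (tens b c) = M2 (M2 (\<Delta> a) (tens b u)) (tens u c)" by (rule M2_split_r)
  have "eps_id \<epsilon> (tmap id (m a) (M2 D1 (tens b c))) = m (m a (eps_id \<epsilon> (M2 D1 (tens b u)))) c"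
    by (simp only: e8a s1 M2_assoc[symmetric] e1[OF fe]) (simp only: M2_assoc e2[OF fe])
  also have "\<dots> = eps_id \<epsilon> (M2 (\<Delta> a) (tens b c))"
    using lemmaA[OF ca Dr F4, of a] by (simp only: s2 e1[OF fe])
  finally show ?thesis .
qed

lemma vi2_WB:
  assumes ca: coassoc and Dl: "assocr (tmap \<Delta> id D1) = M3 (assocr (tens D1 u)) (tens u D1)"
    and E1: "\<And>a z. \<epsilon> (m a z) = \<epsilon> (m (eps_id \<epsilon> (M2 (tens a u) D1)) z)"
  shows "eps_id \<epsilon> (tmap id (\<lambda>y. m y c) (M2 (tens a b) D1)) = eps_id \<epsilon> (M2 (tens a b) (\<Delta> c))"
proof -
  have s1: "M2 (tens a b) D1 = M2 (tens u b) (M2 (tens a u) D1)" by (rule M2_split_l)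
  have s2: "M2 (tens a b) (\<Delta> c) = M2 (tens u b) (M2 (tens a u) (\<Delta> c))" by (rule M2_split_l)
  have "eps_id \<epsilon> (tmap id (\<lambda>y. m y c) (M2 (tens a b) D1)) = m (m b (eps_id \<epsilon> (M2 (tens a u) D1))) c"
    by (simp only: e8b s1 e1[OF fe] e2[OF fe])
  also have "\<dots> = eps_id \<epsilon> (M2 (tens a b) (\<Delta> c))"
    using lemmaB[OF ca Dl E1, of a c] by (simp only: s2 e2[OF fe] m_assoc)
  finally show ?thesis .
qed

lemma F4_from_ax2:
  assumes "\<epsilon> (m (m x u) b) = eps_eps \<epsilon> (M2 (M2 (tens x u) (tw (\<Delta> u))) (tens u b))"
  shows "\<epsilon> (m x b) = \<epsilon> (m x (eps_id \<epsilon> (M2 D1 (tens b u))))"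
  using assms by (simp add: w1[OF fe])

lemma E1_from_ax1:
  assumes "\<epsilon> (m (m a u) z) = eps_eps \<epsilon> (M2 (M2 (tens a u) (\<Delta> u)) (tens u z))"
  shows "\<epsilon> (m a z) = \<epsilon> (m (eps_id \<epsilon> (M2 (tens a u) D1)) z)"
  using assms by (simp add: w2[OF fe])

end

end



context WD
begin

context
  fixes \<epsilon> :: "('b \<Rightarrow>\<^sub>0 'k) \<Rightarrow> 'k"
  assumes fe: "kfunctional \<epsilon>"
    and cu2: "\<And>a. id_eps \<epsilon> (\<Delta> a) = a"
begin

lemma E1_from_V2:
  assumes V2: "eps_id \<epsilon> (tmap id (\<lambda>y. m y z) (M2 (tens a u) D1)) = eps_id \<epsilon> (M2 (tens a u) (\<Delta> z))"
  shows "\<epsilon> (m a z) = \<epsilon> (m (eps_id \<epsilon> (M2 (tens a u) D1)) z)"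
proof -
  have "\<epsilon> (m (eps_id \<epsilon> (M2 (tens a u) D1)) z) = \<epsilon> (eps_id \<epsilon> (M2 (M2 (tens a u) D1) (tens u z)))"
    by (simp only: e1[OF fe])
  also have "\<dots> = \<epsilon> (eps_id \<epsilon> (M2 (tens a u) (\<Delta> z)))"
    using V2 by (simp only: e8b)
  also have "\<dots> = \<epsilon> (id_eps \<epsilon> (M2 (tens a u) (\<Delta> z)))"
    by (simp only: e5a[OF fe, symmetric] e5b[OF fe])
  also have "\<dots> = \<epsilon> (m a z)"
    by (simp only: e3[OF fe] cu2)
  finally show ?thesis by simp
qed

lemma F4_from_V1:
  assumes V1: "eps_id \<epsilon> (tmap id (m x) (M2 D1 (tens c u))) = eps_id \<epsilon> (M2 (\<Delta> x) (tens c u))"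
  shows "\<epsilon> (m x c) = \<epsilon> (m x (eps_id \<epsilon> (M2 D1 (tens c u))))"
proof -
  have "\<epsilon> (m x (eps_id \<epsilon> (M2 D1 (tens c u)))) = \<epsilon> (eps_id \<epsilon> (M2 (tens u x) (M2 D1 (tens c u))))"
    by (simp only: e2[OF fe])
  also have "\<dots> = \<epsilon> (eps_id \<epsilon> (M2 (\<Delta> x) (tens c u)))"
    using V1 by (simp only: e8a)
  also have "\<dots> = \<epsilon> (id_eps \<epsilon> (M2 (\<Delta> x) (tens c u)))"
    by (simp only: e5a[OF fe, symmetric] e5b[OF fe])
  also have "\<dots> = \<epsilon> (m x c)"
    by (simp only: e4[OF fe] cu2)
  finally show ?thesis by simp
qed

lemma ax1_from:
  assumes E1: "\<And>z. \<epsilon> (m a z) = \<epsilon> (m (eps_id \<epsilon> (M2 (tens a u) D1)) z)"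
    and V2: "eps_id \<epsilon> (tmap id (\<lambda>y. m y b) (M2 (tens a u) D1)) = eps_id \<epsilon> (M2 (tens a u) (\<Delta> b))"
  shows "\<epsilon> (m (m a b) c) = eps_eps \<epsilon> (M2 (M2 (tens a u) (\<Delta> b)) (tens u c))"
proof -
  have "eps_id \<epsilon> (M2 (tens a u) (\<Delta> b)) = m (eps_id \<epsilon> (M2 (tens a u) D1)) b"
    using V2 by (simp only: e8b e1[OF fe])
  then have "eps_eps \<epsilon> (M2 (M2 (tens a u) (\<Delta> b)) (tens u c)) = \<epsilon> (m (m (eps_id \<epsilon> (M2 (tens a u) D1)) b) c)"
    by (simp only: w2[OF fe])
  also have "\<dots> = \<epsilon> (m a (m b c))"
    by (simp only: m_assoc E1[symmetric])
  finally show ?thesis by (simp add: m_assoc)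
qed

lemma ax2_from:
  assumes F4: "\<And>x. \<epsilon> (m x c) = \<epsilon> (m x (eps_id \<epsilon> (M2 D1 (tens c u))))"
    and V1: "eps_id \<epsilon> (tmap id (m b) (M2 D1 (tens c u))) = eps_id \<epsilon> (M2 (\<Delta> b) (tens c u))"
  shows "\<epsilon> (m (m a b) c) = eps_eps \<epsilon> (M2 (M2 (tens a u) (tw (\<Delta> b))) (tens u c))"
proof -
  have "eps_id \<epsilon> (M2 (\<Delta> b) (tens c u)) = m b (eps_id \<epsilon> (M2 D1 (tens c u)))"
    using V1 by (simp only: e8a e2[OF fe])
  then have "eps_eps \<epsilon> (M2 (M2 (tens a u) (tw (\<Delta> b))) (tens u c)) = \<epsilon> (m a (m b (eps_id \<epsilon> (M2 D1 (tens c u)))))"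
    by (simp only: w1[OF fe])
  also have "\<dots> = \<epsilon> (m (m a b) c)"
    by (simp only: m_assoc[symmetric] F4[symmetric])
  finally show ?thesis by simp
qed

end

definition "PhiD w = iota M3 (tmap id \<Delta> (snd w e2))"
definition "PsiD w = iota M3 (assocr (tmap \<Delta> id (snd w e2)))"

lemma snd_iota_e2[simp]: "snd (iota M2 x) e2 = x"
  by (simp add: iota_def)

lemma mult_iota2: "w \<in> multipliers M2 \<Longrightarrow> w = iota M2 (snd w e2)"
  by (rule multipliers_iota[OF uM2])

lemma PhiD_ext: "is_mult_ext m PhiD (id_Delta m D) (one_tens_E (iota M2 D1))"
  unfolding is_mult_ext_def
proof (intro conjI ballI allI)
  show "PhiD w \<in> multipliers M3" for w unfolding PhiD_def by (rule iota_multipliers[OF aM3])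
  show "PhiD (mmul w w') = mmul (PhiD w) (PhiD w')" if "w \<in> multipliers M2" "w' \<in> multipliers M2" for w w'
  proof -
    have "mmul w w' = iota M2 (M2 (snd w e2) (snd w' e2))"
      by (subst mult_iota2[OF that(1)], subst mult_iota2[OF that(2)]) (simp add: mmul_iota[OF aM2])
    then show ?thesis unfolding PhiD_def by (simp add: tidD_mult mmul_iota[OF aM3])
  qed
  show "PhiD (iota M2 x) = id_Delta m D x" for x unfolding PhiD_def by (simp add: id_Delta_eq)
  show "PhiD munit = one_tens_E (iota M2 D1)"
    unfolding PhiD_def munit_iota[OF uM2] by (simp add: one_tens_E_iota)
qed

lemma PsiD_ext: "is_mult_ext m PsiD (Delta_id m D) (E_tens_one (iota M2 D1))"
  unfolding is_mult_ext_def
proof (intro conjI ballI allI)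
  show "PsiD w \<in> multipliers M3" for w unfolding PsiD_def by (rule iota_multipliers[OF aM3])
  show "PsiD (mmul w w') = mmul (PsiD w) (PsiD w')" if "w \<in> multipliers M2" "w' \<in> multipliers M2" for w w'
  proof -
    have "mmul w w' = iota M2 (M2 (snd w e2) (snd w' e2))"
      by (subst mult_iota2[OF that(1)], subst mult_iota2[OF that(2)]) (simp add: mmul_iota[OF aM2])
    then show ?thesis unfolding PsiD_def by (simp add: tDid_mult assocr_M2l mmul_iota[OF aM3])
  qed
  show "PsiD (iota M2 x) = Delta_id m D x" for x unfolding PsiD_def by (simp add: Delta_id_eq)
  show "PsiD munit = E_tens_one (iota M2 D1)"
    unfolding PsiD_def munit_iota[OF uM2] by (simp add: E_tens_one_iota)
qed

lemma ext_on_E: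
  assumes "is_mult_ext m \<Phi> (id_Delta m D) e" "is_mult_ext m \<Psi> (Delta_id m D) e'"
  shows "\<Phi> (iota M2 D1) = iota M3 (tmap id \<Delta> D1)" "\<Psi> (iota M2 D1) = iota M3 (assocr (tmap \<Delta> id D1))"
  using assms unfolding is_mult_ext_def by (simp_all add: id_Delta_eq Delta_id_eq)

lemma span_left: "M2 Y Z \<in> kspan {M2 Y (tens b b') | b b'. True}"
proof -
  have "M2 Y Z = M2 Y (\<Sum>p\<in>Poly_Mapping.keys Z. sc (Poly_Mapping.lookup Z p) (bv p))"
    by (subst decomp[of Z]) simp
  also have "\<dots> = (\<Sum>p\<in>Poly_Mapping.keys Z. sc (Poly_Mapping.lookup Z p) (M2 Y (tens (bv (fst p)) (bv (snd p)))))"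
    by (simp add: klinear_sum klinear_sc bv_pair[symmetric])
  also have "\<dots> \<in> kspan {M2 Y (tens b b') | b b'. True}"
    by (intro kspan_sum kspan_sc kspan_base) auto
  finally show ?thesis .
qed

lemma span_right: "M2 Z Y \<in> kspan {M2 (tens b b') Y | b b'. True}"
proof -
  have "M2 Z Y = M2 (\<Sum>p\<in>Poly_Mapping.keys Z. sc (Poly_Mapping.lookup Z p) (bv p)) Y"
    by (subst decomp[of Z]) simp
  also have "\<dots> = (\<Sum>p\<in>Poly_Mapping.keys Z. sc (Poly_Mapping.lookup Z p) (M2 (tens (bv (fst p)) (bv (snd p))) Y))"
    by (simp add: klinear_sum[OF klinear_tmult1] klinear_sc[OF klinear_tmult1] bv_pair[symmetric])
  also have "\<dots> \<in> kspan {M2 (tens b b') Y | b b'. True}"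
    by (intro kspan_sum kspan_sc kspan_base) auto
  finally show ?thesis .
qed

lemma fst_iota[simp]: "fst (iota M x) = M x" and snd_iota[simp]: "snd (iota M x) = (\<lambda>y. M y x)"
  by (simp_all add: iota_def)

lemma span_iv1: "kspan {fst (D a) (tens b b') | a b b'. True} = kspan {fst (iota M2 D1) (tens b b') | b b'. True}"
proof (rule kspan_eqI)
  show "{fst (D a) (tens b b') | a b b'. True} \<subseteq> kspan {fst (iota M2 D1) (tens b b') | b b'. True}"
  proof safe
    fix a b b'
    have "fst (D a) (tens b b') = M2 D1 (M2 (\<Delta> a) (tens b b'))" by (simp add: M2_assoc[symmetric])
    then show "fst (D a) (tens b b') \<in> kspan {fst (iota M2 D1) (tens b b') | b b'. True}"
      using span_left[of D1 "M2 (\<Delta> a) (tens b b')"] by simp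
  qed
  show "{fst (iota M2 D1) (tens b b') | b b'. True} \<subseteq> kspan {fst (D a) (tens b b') | a b b'. True}"
    by (auto intro!: kspan_base)
qed

lemma span_iv2: "kspan {snd (D a) (tens b b') | a b b'. True} = kspan {snd (iota M2 D1) (tens b b') | b b'. True}"
proof (rule kspan_eqI)
  show "{snd (D a) (tens b b') | a b b'. True} \<subseteq> kspan {snd (iota M2 D1) (tens b b') | b b'. True}"
  proof safe
    fix a b b'
    have "snd (D a) (tens b b') = M2 (M2 (tens b b') (\<Delta> a)) D1" by (simp add: M2_assoc)
    then show "snd (D a) (tens b b') \<in> kspan {snd (iota M2 D1) (tens b b') | b b'. True}"
      using span_right[of "M2 (tens b b') (\<Delta> a)" D1] by simp
  qed
  show "{snd (iota M2 D1) (tens b b') | b b'. True} \<subseteq> kspan {snd (D a) (tens b b') | a b b'. True}"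
    by (auto intro!: kspan_base)
qed

end



context WD
begin

lemma WB_to_WMB:
  assumes WB: "weak_bialgebra m u \<Delta> \<epsilon>"
  shows "weak_multiplier_bialgebra m (iota M2 D1) D \<epsilon>"
proof -
  let ?E = "iota M2 D1"
  have fe: "kfunctional \<epsilon>" using WB unfolding weak_bialgebra_def by blast
  have ca0: "\<forall>a. assocr (tmap \<Delta> id (\<Delta> a)) = tmap id \<Delta> (\<Delta> a)"
    using WB unfolding weak_bialgebra_def by blast
  have cu1: "\<And>a. eps_id \<epsilon> (\<Delta> a) = a" using WB unfolding weak_bialgebra_def by blast
  have cu2: "\<And>a. id_eps \<epsilon> (\<Delta> a) = a" using WB unfolding weak_bialgebra_def by blast
  have Dl: "assocr (tmap \<Delta> id D1) = M3 (assocr (tens D1 u)) (tens u D1)"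
    using WB unfolding weak_bialgebra_def by blast
  have Dr: "assocr (tmap \<Delta> id D1) = M3 (tens u D1) (assocr (tens D1 u))"
    using WB unfolding weak_bialgebra_def by blast
  have ax1: "\<And>a b c. \<epsilon> (m (m a b) c) = eps_eps \<epsilon> (M2 (M2 (tens a u) (\<Delta> b)) (tens u c))"
    using WB unfolding weak_bialgebra_def by blast
  have ax2: "\<And>a b c. \<epsilon> (m (m a b) c) = eps_eps \<epsilon> (M2 (M2 (tens a u) (tw (\<Delta> b))) (tens u c))"
    using WB unfolding weak_bialgebra_def by blast
  have ca: coassoc using ca0 unfolding coassoc_def by blast
  have F4: "\<And>x b. \<epsilon> (m x b) = \<epsilon> (m x (eps_id \<epsilon> (M2 D1 (tens b u))))"
    by (rule F4_from_ax2[OF fe cu1 ax2])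
  have E1: "\<And>a z. \<epsilon> (m a z) = \<epsilon> (m (eps_id \<epsilon> (M2 (tens a u) D1)) z)"
    by (rule E1_from_ax1[OF fe cu1 ax1])
  have h1: "kalgebra m" by (rule am)
  have h2: "\<forall>a. \<exists>t. mu m t = a"
    by (intro allI exI[of _ "tens _ u"]) (simp add: mu_tens[OF bm])
  have h3: "\<forall>b. (\<forall>a. m a b = 0) \<longrightarrow> b = 0" by (metis mu1)
  have h4: "\<forall>b. (\<forall>a. m b a = 0) \<longrightarrow> b = 0" by (metis mu2)
  have h5: "?E \<in> multipliers (tmult m m)" by (rule iota_multipliers[OF aM2])
  have h6: "mmul ?E ?E = ?E" by (simp add: mmul_iota[OF aM2])
  have h7: "\<forall>a. D a \<in> multipliers (tmult m m)" by (simp add: iota_multipliers[OF aM2])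
  have h8: "\<forall>a b. D (a + b) = madd (D a) (D b)" by (simp add: madd_iota[OF bM2] klinear_add[OF lD])
  have h9: "\<forall>c a. D (sc c a) = msc c (D a)" by (simp add: msc_iota[OF bM2] klinear_sc[OF lD])
  have h10: "\<forall>a b. D (m a b) = mmul (D a) (D b)" by (simp add: mmul_iota[OF aM2] hD)
  have h12: "\<forall>a b. (\<exists>t. iota (tmult m m) t = mmul (D a) (one_tens m b)) \<and>
            (\<exists>t. iota (tmult m m) t = mmul (tens_one m a) (D b))"
    by (simp add: one_tens_iota tens_one_iota mmul_iota[OF aM2]) blast
  have h13: "\<forall>x. (assocr \<circ> tmap (T2 m D) id \<circ> assocl) (tmap id (T1 m D) x) =
          tmap id (T1 m D) ((assocr \<circ> tmap (T2 m D) id \<circ> assocl) x)"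
    using ii_iff ca unfolding iiL_def iiR_def by blast
  have h14: "\<forall>x. eps_id \<epsilon> (T1 m D x) = mu m x \<and> id_eps \<epsilon> (T2 m D x) = mu m x"
  proof (intro allI conjI)
    fix x
    show "eps_id \<epsilon> (T1 m D x) = mu m x"
      by (rule tens_ext[where f="\<lambda>x. eps_id \<epsilon> (T1 m D x)" and g="mu m"])
         (intro linD klinear_T1 klinear_mu | simp add: T1_tens e1[OF fe] cu1 mu_tens[OF bm])+
    show "id_eps \<epsilon> (T2 m D x) = mu m x"
      by (rule tens_ext[where f="\<lambda>x. id_eps \<epsilon> (T2 m D x)" and g="mu m"])
         (intro linD klinear_T2 klinear_mu | simp add: T2_tens e3[OF fe] cu2 mu_tens[OF bm])+
  qed
  have h15: "kspan {fst (D a) (tens b b') | a b b'. True} = kspan {fst ?E (tens b b') | b b'. True}"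
    by (rule span_iv1)
  have h16: "kspan {snd (D a) (tens b b') | a b b'. True} = kspan {snd ?E (tens b b') | b b'. True}"
    by (rule span_iv2)
  have h17: "\<exists>\<Phi>. is_mult_ext m \<Phi> (id_Delta m D) (one_tens_E ?E)" using PhiD_ext by blast
  have h18: "\<exists>\<Psi>. is_mult_ext m \<Psi> (Delta_id m D) (E_tens_one ?E)" using PsiD_ext by blast
  have h19: "\<forall>\<Phi> \<Psi>. is_mult_ext m \<Phi> (id_Delta m D) (one_tens_E ?E) \<longrightarrow>
             is_mult_ext m \<Psi> (Delta_id m D) (E_tens_one ?E) \<longrightarrow>
             \<Phi> ?E = \<Psi> ?E \<and>
             mmul (E_tens_one ?E) (one_tens_E ?E) = \<Phi> ?E \<and>
             mmul (one_tens_E ?E) (E_tens_one ?E) = \<Phi> ?E"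
  proof (intro allI impI)
    fix \<Phi> \<Psi>
    assume a1: "is_mult_ext m \<Phi> (id_Delta m D) (one_tens_E ?E)"
      and a2: "is_mult_ext m \<Psi> (Delta_id m D) (E_tens_one ?E)"
    have c: "tmap id \<Delta> D1 = assocr (tmap \<Delta> id D1)" using ca unfolding coassoc_def by simp
    show "\<Phi> ?E = \<Psi> ?E \<and> mmul (E_tens_one ?E) (one_tens_E ?E) = \<Phi> ?E \<and>
          mmul (one_tens_E ?E) (E_tens_one ?E) = \<Phi> ?E"
      unfolding ext_on_E[OF a1 a2] c
      by (simp add: E_tens_one_iota one_tens_E_iota mmul_iota[OF aM3] Dl[symmetric] Dr[symmetric])
  qed
  have h20: "\<forall>a b c.
        eps_id \<epsilon> (tmap id (m a) (fst ?E (tens b c))) = eps_id \<epsilon> (fst (D a) (tens b c)) \<and>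
        eps_id \<epsilon> (tmap id (\<lambda>y. m y c) (snd ?E (tens a b))) = eps_id \<epsilon> (snd (D c) (tens a b))"
    using vi1_WB[OF fe cu1 ca Dr F4] vi2_WB[OF fe cu1 ca Dl E1] by simp
  show ?thesis
    unfolding weak_multiplier_bialgebra_def
    by (intro conjI; fact)
qed

lemma WMB_to_WB:
  assumes WMB: "weak_multiplier_bialgebra m E D \<epsilon>"
  shows "E = iota M2 D1 \<and> weak_bialgebra m u \<Delta> \<epsilon>"
proof -
  have Em: "E \<in> multipliers M2" using WMB unfolding weak_multiplier_bialgebra_def by blast
  have Ei: "mmul E E = E" using WMB unfolding weak_multiplier_bialgebra_def by blast
  have iv1: "kspan {fst (D a) (tens b b') | a b b'. True} = kspan {fst E (tens b b') | b b'. True}"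
    using WMB unfolding weak_multiplier_bialgebra_def by blast
  have iv2: "kspan {snd (D a) (tens b b') | a b b'. True} = kspan {snd E (tens b b') | b b'. True}"
    using WMB unfolding weak_multiplier_bialgebra_def by blast
  define e where "e = snd E e2"
  have Ee: "E = iota M2 e" unfolding e_def by (rule mult_iota2[OF Em])
  have ee: "M2 e e = e"
    using Ei unfolding Ee mmul_iota[OF aM2] by (rule iota_inj[OF uM2])
  have "D1 \<in> kspan {fst (D a) (tens b b') | a b b'. True}"
    by (rule kspan_base) (rule CollectI, intro exI[of _ u] exI[of _ u], simp)
  then have "D1 \<in> kspan {fst E (tens b b') | b b'. True}" unfolding iv1 .
  then have s1: "M2 e D1 = D1"
    by (rule kspan_lin[OF klinear_tmult2]) (auto simp: Ee M2_assoc[symmetric] ee)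
  have "e \<in> kspan {fst E (tens b b') | b b'. True}"
    by (rule kspan_base) (rule CollectI, intro exI[of _ u], simp add: Ee)
  then have "e \<in> kspan {fst (D a) (tens b b') | a b b'. True}" unfolding iv1 .
  then have s2: "M2 D1 e = e"
    by (rule kspan_lin[OF klinear_tmult2]) (auto simp: M2_assoc[symmetric])
  have "D1 \<in> kspan {snd (D a) (tens b b') | a b b'. True}"
    by (rule kspan_base) (rule CollectI, intro exI[of _ u] exI[of _ u], simp)
  then have "D1 \<in> kspan {snd E (tens b b') | b b'. True}" unfolding iv2 .
  then have s3: "M2 D1 e = D1"
    by (rule kspan_lin[OF klinear_tmult1]) (auto simp: Ee M2_assoc ee)
  have eD: "e = D1" using s2 s3 by simp
  have EE: "E = iota M2 D1" using Ee eD by simp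
  have fe: "kfunctional \<epsilon>" using WMB unfolding weak_multiplier_bialgebra_def by blast
  have ii: "\<forall>x. (assocr \<circ> tmap (T2 m D) id \<circ> assocl) (tmap id (T1 m D) x) =
          tmap id (T1 m D) ((assocr \<circ> tmap (T2 m D) id \<circ> assocl) x)"
    using WMB unfolding weak_multiplier_bialgebra_def by blast
  have ca: coassoc using ii ii_iff unfolding iiL_def iiR_def by blast
  have iii: "\<forall>x. eps_id \<epsilon> (T1 m D x) = mu m x \<and> id_eps \<epsilon> (T2 m D x) = mu m x"
    using WMB unfolding weak_multiplier_bialgebra_def by blast
  have cu1: "eps_id \<epsilon> (\<Delta> a) = a" for a
    using iii[rule_format, of "tens a u"] by (simp add: T1_tens mu_tens[OF bm])
  have cu2: "id_eps \<epsilon> (\<Delta> a) = a" for a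
    using iii[rule_format, of "tens u a"] by (simp add: T2_tens mu_tens[OF bm])
  have v1: "\<exists>\<Phi>. is_mult_ext m \<Phi> (id_Delta m D) (one_tens_E E)"
    using WMB unfolding weak_multiplier_bialgebra_def by blast
  have v2: "\<exists>\<Psi>. is_mult_ext m \<Psi> (Delta_id m D) (E_tens_one E)"
    using WMB unfolding weak_multiplier_bialgebra_def by blast
  have v3: "\<forall>\<Phi> \<Psi>. is_mult_ext m \<Phi> (id_Delta m D) (one_tens_E E) \<longrightarrow>
             is_mult_ext m \<Psi> (Delta_id m D) (E_tens_one E) \<longrightarrow>
             \<Phi> E = \<Psi> E \<and>
             mmul (E_tens_one E) (one_tens_E E) = \<Phi> E \<and>
             mmul (one_tens_E E) (E_tens_one E) = \<Phi> E"
    using WMB unfolding weak_multiplier_bialgebra_def by blast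
  obtain \<Phi> \<Psi> where P1: "is_mult_ext m \<Phi> (id_Delta m D) (one_tens_E E)"
    and P2: "is_mult_ext m \<Psi> (Delta_id m D) (E_tens_one E)" using v1 v2 by blast
  have P3: "mmul (E_tens_one E) (one_tens_E E) = \<Phi> E" and P4: "mmul (one_tens_E E) (E_tens_one E) = \<Phi> E"
    using v3 P1 P2 by blast+
  have PE: "\<Phi> E = iota M3 (tmap id \<Delta> D1)" unfolding EE by (rule ext_on_E(1)[OF P1 P2])
  have c: "tmap id \<Delta> D1 = assocr (tmap \<Delta> id D1)" using ca unfolding coassoc_def by simp
  have Dl: "assocr (tmap \<Delta> id D1) = M3 (assocr (tens D1 u)) (tens u D1)"
    using P3 unfolding PE c unfolding EE E_tens_one_iota one_tens_E_iota mmul_iota[OF aM3]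
    by (auto dest: iota_inj[OF uM3])
  have Dr: "assocr (tmap \<Delta> id D1) = M3 (tens u D1) (assocr (tens D1 u))"
    using P4 unfolding PE c unfolding EE E_tens_one_iota one_tens_E_iota mmul_iota[OF aM3]
    by (auto dest: iota_inj[OF uM3])
  have vi: "\<forall>a b c.
        eps_id \<epsilon> (tmap id (m a) (fst E (tens b c))) = eps_id \<epsilon> (fst (D a) (tens b c)) \<and>
        eps_id \<epsilon> (tmap id (\<lambda>y. m y c) (snd E (tens a b))) = eps_id \<epsilon> (snd (D c) (tens a b))"
    using WMB unfolding weak_multiplier_bialgebra_def by blast
  have V1: "eps_id \<epsilon> (tmap id (m a) (M2 D1 (tens b c))) = eps_id \<epsilon> (M2 (\<Delta> a) (tens b c))" for a b c
    using vi unfolding EE by simp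
  have V2: "eps_id \<epsilon> (tmap id (\<lambda>y. m y c) (M2 (tens a b) D1)) = eps_id \<epsilon> (M2 (tens a b) (\<Delta> c))" for a b c
    using vi unfolding EE by simp
  have E1: "\<epsilon> (m a z) = \<epsilon> (m (eps_id \<epsilon> (M2 (tens a u) D1)) z)" for a z
    by (rule E1_from_V2[OF fe cu2 V2])
  have F4: "\<epsilon> (m x c) = \<epsilon> (m x (eps_id \<epsilon> (M2 D1 (tens c u))))" for x c
    by (rule F4_from_V1[OF fe cu2 V1])
  have ax: "\<forall>a b c.
        \<epsilon> (m (m a b) c) = eps_eps \<epsilon> (tmult m m (tmult m m (tens a u) (\<Delta> b)) (tens u c)) \<and>
        \<epsilon> (m (m a b) c) = eps_eps \<epsilon> (tmult m m (tmult m m (tens a u) (tw (\<Delta> b))) (tens u c))"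
    using ax1_from[OF fe cu2 E1 V2] ax2_from[OF fe cu2 F4 V1] by blast
  have wb: "weak_bialgebra m u \<Delta> \<epsilon>"
    unfolding weak_bialgebra_def
    using lD fe ca cu1 cu2 hD Dl Dr ax unfolding coassoc_def by blast
  show ?thesis using EE wb by blast
qed

end



theorem theorem2p10:
  fixes m :: "('b \<Rightarrow>\<^sub>0 'k::field) \<Rightarrow> ('b \<Rightarrow>\<^sub>0 'k) \<Rightarrow> ('b \<Rightarrow>\<^sub>0 'k)"
    and u :: "'b \<Rightarrow>\<^sub>0 'k"
  assumes "unital_algebra m u"
  shows "bij_betw (\<lambda>(\<Delta>, \<epsilon>). (iota (tmult m m) (\<Delta> u), iota (tmult m m) \<circ> \<Delta>, \<epsilon>))
           {(\<Delta>, \<epsilon>). weak_bialgebra m u \<Delta> \<epsilon>}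
           {(E, D, \<epsilon>). weak_multiplier_bialgebra m E D \<epsilon>}"
proof -
  interpret U: UA m u by (rule UA.intro) (rule assms)
  let ?F = "\<lambda>(\<Delta>, \<epsilon>). (iota (tmult m m) (\<Delta> u), iota (tmult m m) \<circ> \<Delta>, \<epsilon>)"
  let ?A = "{(\<Delta>, \<epsilon>). weak_bialgebra m u \<Delta> \<epsilon>}"
  let ?B = "{(E, D, \<epsilon>). weak_multiplier_bialgebra m E D \<epsilon>}"
  have WBD: "WD m u \<Delta>" if "weak_bialgebra m u \<Delta> \<epsilon>" for \<Delta> \<epsilon>
  proof (rule WD.intro)
    show "UA m u" by (rule UA.intro) (rule assms)
    show "WD_axioms m \<Delta>"
      by (rule WD_axioms.intro) (use that in \<open>auto simp: weak_bialgebra_def\<close>)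
  qed
  have inj: "inj_on ?F ?A"
  proof (rule inj_onI)
    fix p q assume p: "p \<in> ?A" and q: "q \<in> ?A" and eq: "?F p = ?F q"
    obtain \<Delta> \<epsilon> where pp: "p = (\<Delta>, \<epsilon>)" by (cases p)
    obtain \<Delta>' \<epsilon>' where qq: "q = (\<Delta>', \<epsilon>')" by (cases q)
    have 1: "iota (tmult m m) \<circ> \<Delta> = iota (tmult m m) \<circ> \<Delta>'" and 2: "\<epsilon> = \<epsilon>'"
      using eq unfolding pp qq by auto
    have "\<Delta> a = \<Delta>' a" for a
      using fun_cong[OF 1, of a] by (auto intro: iota_inj[OF U.uM2])
    then show "p = q" unfolding pp qq using 2 by auto
  qed
  have sub1: "?F ` ?A \<subseteq> ?B"
  proof
    fix x assume "x \<in> ?F ` ?A"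
    then obtain \<Delta> \<epsilon> where x: "x = ?F (\<Delta>, \<epsilon>)" and wb: "weak_bialgebra m u \<Delta> \<epsilon>" by auto
    interpret W: WD m u \<Delta> by (rule WBD[OF wb])
    show "x \<in> ?B" using W.WB_to_WMB[OF wb] unfolding x by simp
  qed
  have sub2: "?B \<subseteq> ?F ` ?A"
  proof
    fix x assume "x \<in> ?B"
    then obtain E D \<epsilon> where x: "x = (E, D, \<epsilon>)" and wmb: "weak_multiplier_bialgebra m E D \<epsilon>" by auto
    define \<Delta> where "\<Delta> a = snd (D a) (tens u u)" for a
    have Dm: "D a \<in> multipliers (tmult m m)" for a
      using wmb unfolding weak_multiplier_bialgebra_def by blast
    have Da: "D a = iota (tmult m m) (\<Delta> a)" for a
      unfolding \<Delta>_def by (rule multipliers_iota[OF U.uM2 Dm])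
    have DD: "D = iota (tmult m m) \<circ> \<Delta>" using Da by (auto intro!: ext)
    have Dadd: "D (a + b) = madd (D a) (D b)" and Dsc: "D (sc c a) = msc c (D a)"
      and Dmul: "D (m a b) = mmul (D a) (D b)" for a b c
      using wmb unfolding weak_multiplier_bialgebra_def by blast+
    have lD: "klinear \<Delta>"
    proof (rule klinearI)
      show "\<Delta> (a + b) = \<Delta> a + \<Delta> b" for a b
        using Dadd[of a b] unfolding Da madd_iota[OF U.bM2] by (rule iota_inj[OF U.uM2])
      show "\<Delta> (sc c a) = sc c (\<Delta> a)" for c a
        using Dsc[of c a] unfolding Da msc_iota[OF U.bM2] by (rule iota_inj[OF U.uM2])
    qed
    have hD: "\<Delta> (m a b) = tmult m m (\<Delta> a) (\<Delta> b)" for a b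
      using Dmul[of a b] unfolding Da mmul_iota[OF U.aM2] by (rule iota_inj[OF U.uM2])
    interpret W: WD m u \<Delta>
    proof (rule WD.intro)
      show "UA m u" by (rule UA.intro) (rule assms)
      show "WD_axioms m \<Delta>" by (rule WD_axioms.intro) (use lD hD in auto)
    qed
    have r: "E = iota (tmult m m) (\<Delta> u) \<and> weak_bialgebra m u \<Delta> \<epsilon>"
      using W.WMB_to_WB[of E \<epsilon>] wmb unfolding DD by blast
    then have "x = ?F (\<Delta>, \<epsilon>)" unfolding x DD by simp
    moreover have "(\<Delta>, \<epsilon>) \<in> ?A" using r by simp
    ultimately show "x \<in> ?F ` ?A" by blast
  qed
  show ?thesis unfolding bij_betw_def using inj sub1 sub2 by blast
qed


end
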